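(* Assume the Standing setting. Then there exist constants $a,b_0,b_1\ge0$, independent of $\epsilon$, $\eta$, $t$, such that for every $\epsilon\in(0,\epsilon_*]$, $$\|H_1H^{-1/2}(\epsilon,\eta,t)\|\le a+b_0+b_1\epsilon\quad\text{for all }\eta>0,\ t\in\mathbb R.$$
   Context: Standing setting. $\mathcal H$ is a separable Hilbert space. $H_0$ is self-adjoint with $H_0\ge 1+\gamma_0$ for some $\gamma_0>0$. $H_1$ is self-adjoint and $H_0^{1/2}$-bounded, i.e. $\mathcal D(H_0^{1/2})\subset\mathcal D(H_1)$ and $H_1H_0^{-1/2}$ is bounded. $g\in C^1(\mathbb R)$ is real-valued with $\operatorname{supp} g'\subset(0,1)$ and $g(s)=0$ for $s<0$; set $M=\max_{s\in[0,1]}|g(s)|$. For $\epsilon>0,\eta>0,t\in\mathbb R$ put $H(\epsilon,\eta,t)=H_0+\epsilon g(\eta t)H_1$ on $\mathcal D(H_0)$ (self-adjoint there). $\epsilon_*>0$ is fixed so that $\frac{3\gamma_0+1}{\gamma_0}\epsilon_* M\|H_1H_0^{-1}\|<1$; then $\inf\sigma(H(\epsilon,\eta,t))\ge1$ for all $\epsilon\in(0,\epsilon_*]$, $\eta>0$, $t\in\mathbb R$. *)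

theory Defs
  imports "HOL-Analysis.Analysis"
begin

class complex_normed_vector = real_normed_vector +
  fixes scaleC :: "complex \<Rightarrow> 'a \<Rightarrow> 'a" (infixr \<open>*\<^sub>C\<close> 75)
  assumes scaleC_add_right: "c *\<^sub>C (x + y) = c *\<^sub>C x + c *\<^sub>C y"
    and scaleC_add_left: "(b + c) *\<^sub>C x = b *\<^sub>C x + c *\<^sub>C x"
    and scaleC_scaleC: "b *\<^sub>C (c *\<^sub>C x) = (b * c) *\<^sub>C x"
    and scaleC_of_real: "(complex_of_real r) *\<^sub>C x = r *\<^sub>R x"
    and norm_scaleC: "norm (c *\<^sub>C x) = cmod c * norm x"

text \<open>Complex Hilbert spaces are modelled as complex Banach spaces whose norm
satisfies the parallelogram law (Jordan--von Neumann); the inner product is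
recovered by polarization (antilinear in the first argument).\<close>

definition hilbert_norm :: "'a::{complex_normed_vector,banach} itself \<Rightarrow> bool" where
  "hilbert_norm (_::'a itself) \<longleftrightarrow>
     (\<forall>x y::'a. (norm (x + y))\<^sup>2 + (norm (x - y))\<^sup>2 = 2 * (norm x)\<^sup>2 + 2 * (norm y)\<^sup>2)"

definition separable_carrier :: "'a::topological_space itself \<Rightarrow> bool" where
  "separable_carrier (_::'a itself) \<longleftrightarrow> (\<exists>D::'a set. countable D \<and> closure D = UNIV)"

definition cinner :: "'a::complex_normed_vector \<Rightarrow> 'a \<Rightarrow> complex" where
  "cinner x y = (1/4) * (\<Sum>k<(4::nat). ((-\<i>) ^ k) * complex_of_real ((norm (x + (\<i> ^ k) *\<^sub>C y))\<^sup>2))"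

text \<open>A (possibly unbounded) linear operator is a pair (domain D, map T),
T being linear on the linear subspace D.\<close>

definition lin_op :: "'a::complex_normed_vector set \<Rightarrow> ('a \<Rightarrow> 'a) \<Rightarrow> bool" where
  "lin_op D T \<longleftrightarrow> 0 \<in> D \<and> (\<forall>x\<in>D. \<forall>y\<in>D. x + y \<in> D) \<and> (\<forall>c. \<forall>x\<in>D. c *\<^sub>C x \<in> D)
     \<and> (\<forall>x\<in>D. \<forall>y\<in>D. T (x + y) = T x + T y) \<and> (\<forall>c. \<forall>x\<in>D. T (c *\<^sub>C x) = c *\<^sub>C T x)"

text \<open>Self-adjoint: densely defined, D(T^*) = D(T) and T^* = T.\<close>

definition self_adjoint_op :: "'a::complex_normed_vector set \<Rightarrow> ('a \<Rightarrow> 'a) \<Rightarrow> bool" where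
  "self_adjoint_op D T \<longleftrightarrow> lin_op D T \<and> closure D = UNIV
     \<and> (\<forall>y. (\<exists>z. \<forall>x\<in>D. cinner (T x) y = cinner x z) \<longleftrightarrow> y \<in> D)
     \<and> (\<forall>x\<in>D. \<forall>y\<in>D. cinner (T x) y = cinner x (T y))"

definition op_ge :: "'a::complex_normed_vector set \<Rightarrow> ('a \<Rightarrow> 'a) \<Rightarrow> real \<Rightarrow> bool" where
  "op_ge D T c \<longleftrightarrow> (\<forall>x\<in>D. Re (cinner x (T x)) \<ge> c * (norm x)\<^sup>2)"

definition inv_sqrt_op :: "'a::complex_normed_vector set \<Rightarrow> ('a \<Rightarrow> 'a) \<Rightarrow> ('a \<Rightarrow> 'a)" where
  "inv_sqrt_op D T = (THE S. bounded_linear S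
      \<and> (\<forall>x. cinner x (S x) \<in> \<real> \<and> Re (cinner x (S x)) \<ge> 0)
      \<and> (\<forall>x. S (S x) \<in> D \<and> T (S (S x)) = x))"

definition Hpert :: "('a::complex_normed_vector \<Rightarrow> 'a) \<Rightarrow> ('a \<Rightarrow> 'a) \<Rightarrow> (real \<Rightarrow> real)
    \<Rightarrow> real \<Rightarrow> real \<Rightarrow> real \<Rightarrow> 'a \<Rightarrow> 'a" where
  "Hpert H0 H1 g \<epsilon> \<eta> t = (\<lambda>x. H0 x + (\<epsilon> * g (\<eta> * t)) *\<^sub>R H1 x)"

end

theory Submission
  imports Defs "HOL-Computational_Algebra.Formal_Power_Series"
begin


lemma scaleC_one: "(1::complex) *\<^sub>C x = x"
  using scaleC_of_real[of 1 x] by simp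
lemma scaleC_minus_one: "(-1::complex) *\<^sub>C x = - x"
  using scaleC_of_real[of "-1" x] by simp
lemma scaleC_zero_right: "c *\<^sub>C (0::'a::complex_normed_vector) = 0"
  using scaleC_add_right[of c 0 0] by simp
lemma scaleC_minus_right: "c *\<^sub>C (- x::'a::complex_normed_vector) = - (c *\<^sub>C x)"
  using scaleC_add_right[of c x "-x"] by (simp add: scaleC_zero_right eq_neg_iff_add_eq_0 add.commute)
lemma scaleC_diff_right: "c *\<^sub>C (x - y::'a::complex_normed_vector) = c *\<^sub>C x - c *\<^sub>C y"
  using scaleC_add_right[of c x "-y"] by (simp add: scaleC_minus_right)
lemma scaleC_ii: "\<i> *\<^sub>C (\<i> *\<^sub>C x) = - x"
  by (simp add: scaleC_scaleC scaleC_minus_one)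
lemma norm_scaleC_ii: "norm (\<i> *\<^sub>C x) = norm x"
  by (simp add: norm_scaleC)
lemma scaleC_scaleR_comm: "c *\<^sub>C (r *\<^sub>R x) = r *\<^sub>R (c *\<^sub>C x)"
  by (metis scaleC_of_real scaleC_scaleC mult.commute)
lemma scaleC_mI: "(-\<i>) *\<^sub>C x = - (\<i> *\<^sub>C x)"
proof -
  have "(-\<i>) *\<^sub>C x = (-1) *\<^sub>C (\<i> *\<^sub>C x)" by (simp add: scaleC_scaleC)
  thus ?thesis by (simp add: scaleC_minus_one)
qed
lemma linear_scaleC: "linear (\<lambda>x::'a::complex_normed_vector. c *\<^sub>C x)"
  by (rule linearI) (simp_all add: scaleC_add_right scaleC_scaleR_comm)
lemma additive_bounded_zero:
  fixes h :: "real \<Rightarrow> real"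
  assumes add: "\<And>a b. h (a + b) = h a + h b" and h1: "h 1 = 0" and bd: "\<And>r. \<bar>h r\<bar> \<le> C * \<bar>r\<bar>"
  shows "h r = 0"
proof -
  have h0: "h 0 = 0" using add[of 0 0] by simp
  have hneg: "h (- a) = - h a" for a using add[of a "-a"] h0 by simp
  have hnat: "h (of_nat n * a) = of_nat n * h a" for n a
    by (induction n) (simp_all add: h0 add distrib_right)
  have hnat1: "h (of_nat n) = 0" for n using hnat[of n 1] h1 by simp
  have hint: "h (of_int k) = 0" for k
  proof (cases "k \<ge> 0")
    case True then show ?thesis using hnat1[of "nat k"] by simp
  next
    case False
    then have "of_int k = - (of_nat (nat (-k)) :: real)" by simp
    then have "h (of_int k) = h (- (of_nat (nat (-k))))" by (rule arg_cong)
    also have "\<dots> = - h (of_nat (nat (-k)))" by (rule hneg)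
    also have "\<dots> = 0" by (simp only: hnat1)
    finally show ?thesis .
  qed
  have bnd: "of_nat n * \<bar>h r\<bar> \<le> \<bar>C\<bar>" for n
  proof -
    let ?f = "of_nat n * r - of_int \<lfloor>of_nat n * r\<rfloor>"
    have "of_nat n * h r = h (of_nat n * r)" by (simp add: hnat)
    also have "\<dots> = h ?f + h (of_int \<lfloor>of_nat n * r\<rfloor>)" by (subst add[symmetric]) simp
    also have "\<dots> = h ?f" by (simp add: hint)
    finally have e: "of_nat n * h r = h ?f" .
    have f01: "0 \<le> ?f" "?f \<le> 1" by linarith+
    have "\<bar>h ?f\<bar> \<le> C * \<bar>?f\<bar>" by (rule bd)
    also have "\<dots> \<le> \<bar>C\<bar> * \<bar>?f\<bar>" by (rule mult_right_mono) auto
    also have "\<dots> \<le> \<bar>C\<bar>" by (rule mult_left_le) (use f01 in auto)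
    finally show ?thesis using e by (simp add: abs_mult)
  qed
  show ?thesis
  proof (rule ccontr)
    assume "h r \<noteq> 0"
    then have p: "\<bar>h r\<bar> > 0" by simp
    obtain n :: nat where "\<bar>C\<bar> / \<bar>h r\<bar> < of_nat n" using reals_Archimedean2 by blast
    then have "\<bar>C\<bar> < of_nat n * \<bar>h r\<bar>" using p by (simp add: field_simps)
    with bnd[of n] show False by simp
  qed
qed

lemma bounded_linear_scaleC: "bounded_linear (\<lambda>x::'a::complex_normed_vector. c *\<^sub>C x)"
  by (rule bounded_linear_intro[where K="cmod c"]) (auto simp: scaleC_add_right scaleC_scaleR_comm norm_scaleC)

definition rip :: "'a::complex_normed_vector \<Rightarrow> 'a \<Rightarrow> real" where
  "rip x y = ((norm (x + y))\<^sup>2 - (norm (x - y))\<^sup>2) / 4"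

lemma rip_sym: "rip x y = rip y x"
  by (simp add: rip_def add.commute norm_minus_commute)

lemma rip_self: "rip x x = (norm x)\<^sup>2"
proof -
  have "norm (x + x) = 2 * norm x" by (metis mult_2 norm_scaleR real_norm_def scaleR_2 abs_numeral)
  thus ?thesis by (simp add: rip_def power2_eq_square)
qed

lemma rip_0_left[simp]: "rip 0 y = 0" by (simp add: rip_def)
lemma rip_0_right[simp]: "rip y 0 = 0" by (simp add: rip_def)

lemma rip_bound: "\<bar>rip x y\<bar> \<le> norm x * norm y"
proof -
  have a: "norm (x + y) \<le> norm x + norm y" by (rule norm_triangle_ineq)
  have b: "\<bar>norm x - norm y\<bar> \<le> norm (x - y)" by (rule norm_triangle_ineq3)
  have c: "\<bar>norm x - norm y\<bar> \<le> norm (x + y)" using norm_triangle_ineq3[of x "-y"] by simp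
  have d: "norm (x - y) \<le> norm x + norm y" by (rule norm_triangle_ineq4)
  have "(norm (x+y))\<^sup>2 \<le> (norm x + norm y)\<^sup>2" using a by (simp add: power_mono)
  moreover have "(norm x - norm y)\<^sup>2 \<le> (norm (x-y))\<^sup>2" using b
    by (metis abs_le_square_iff abs_norm_cancel)
  moreover have "(norm (x-y))\<^sup>2 \<le> (norm x + norm y)\<^sup>2" using d by (simp add: power_mono)
  moreover have "(norm x - norm y)\<^sup>2 \<le> (norm (x+y))\<^sup>2" using c
    by (metis abs_le_square_iff abs_norm_cancel)
  ultimately show ?thesis unfolding rip_def by (auto simp: power2_eq_square algebra_simps abs_le_iff)
qed

context
  fixes T :: "'a::{complex_normed_vector,banach} itself"
  assumes hilb: "hilbert_norm TYPE('a)"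
begin

lemma par: "(norm (x + y))\<^sup>2 + (norm (x - y))\<^sup>2 = 2 * (norm x)\<^sup>2 + 2 * (norm (y::'a))\<^sup>2"
  using hilb unfolding hilbert_norm_def by blast

lemma rip_pm: "rip (x + x') y + rip (x - x') y = 2 * rip x (y::'a)"
proof -
  have e: "x + y + x' = x + x' + y" "x + y - x' = x - x' + y" "x - y + x' = x + x' - y" "x - y - x' = x - x' - y"
    by (simp_all add: algebra_simps)
  have 1: "(norm (x + x' + y))\<^sup>2 + (norm (x - x' + y))\<^sup>2 = 2*(norm (x+y))\<^sup>2 + 2*(norm x')\<^sup>2"
    using par[of "x+y" x'] by (simp only: e)
  have 2: "(norm (x + x' - y))\<^sup>2 + (norm (x - x' - y))\<^sup>2 = 2*(norm (x-y))\<^sup>2 + 2*(norm x')\<^sup>2"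
    using par[of "x-y" x'] by (simp only: e)
  show ?thesis using 1 2 unfolding rip_def by (simp add: field_simps)
qed

lemma rip_double: "rip (2 *\<^sub>R x) y = 2 * rip x (y::'a)"
  using rip_pm[of x x y] by (simp add: scaleR_2)

lemma rip_add_left: "rip (u + v) y = rip u y + rip v (y::'a)"
proof -
  let ?x = "(1/2) *\<^sub>R (u + v)" and ?x' = "(1/2) *\<^sub>R (u - v)"
  have "?x + ?x' = u" by (simp add: algebra_simps flip: scaleR_2)
  moreover have "?x - ?x' = v" by (simp add: algebra_simps flip: scaleR_2)
  moreover have "rip (u+v) y = 2 * rip ?x y" using rip_double[of ?x y] by simp
  ultimately show ?thesis using rip_pm[of ?x ?x' y] by simp
qed

lemma rip_minus_left: "rip (-x) y = - rip x (y::'a)"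
  using rip_add_left[of x "-x" y] by simp

lemma rip_add_right: "rip y (u + v) = rip y u + rip y (v::'a)"
  using rip_add_left[of u v y] by (simp add: rip_sym)

lemma rip_scaleR_left: "rip (r *\<^sub>R x) y = r * rip x (y::'a)"
proof -
  define h where "h r = rip (r *\<^sub>R x) y - r * rip x y" for r
  have "h r = 0"
  proof (rule additive_bounded_zero[where h=h and C="2 * norm x * norm y"])
    show "h (a + b) = h a + h b" for a b by (simp add: h_def scaleR_add_left rip_add_left algebra_simps)
    show "h 1 = 0" by (simp add: h_def)
    fix s
    have "\<bar>rip (s *\<^sub>R x) y\<bar> \<le> \<bar>s\<bar> * norm x * norm y" using rip_bound[of "s *\<^sub>R x" y] by simp
    moreover have "\<bar>s * rip x y\<bar> \<le> \<bar>s\<bar> * norm x * norm y" using rip_bound[of x y]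
      by (simp add: abs_mult mult.assoc mult_left_mono)
    ultimately show "\<bar>h s\<bar> \<le> 2 * norm x * norm y * \<bar>s\<bar>" unfolding h_def by (simp add: abs_le_iff algebra_simps)
  qed
  thus ?thesis by (simp add: h_def)
qed

lemma rip_scaleR_right: "rip y (r *\<^sub>R x) = r * rip y (x::'a)"
  using rip_scaleR_left[of r x y] by (simp add: rip_sym)

lemma rip_minus_right: "rip y (-x) = - rip y (x::'a)"
  using rip_minus_left[of x y] by (simp add: rip_sym)
lemma rip_diff_left: "rip (u - v) y = rip u y - rip v (y::'a)"
  using rip_add_left[of u "-v" y] by (simp add: rip_minus_left)
lemma rip_diff_right: "rip y (u - v) = rip y u - rip y (v::'a)"
  using rip_add_right[of y u "-v"] by (simp add: rip_minus_right)

lemma bounded_bilinear_rip: "bounded_bilinear (rip :: 'a \<Rightarrow> 'a \<Rightarrow> real)"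
proof
  show "rip (a + a') b = rip a b + rip a' b" for a a' b :: 'a by (rule rip_add_left)
  show "rip a (b + b') = rip a b + rip a b'" for a b b' :: 'a by (rule rip_add_right)
  show "rip (r *\<^sub>R a) b = r *\<^sub>R rip a b" for r and a b :: 'a by (simp add: rip_scaleR_left)
  show "rip a (r *\<^sub>R b) = r *\<^sub>R rip a b" for r and a b :: 'a by (simp add: rip_scaleR_right)
  show "\<exists>K. \<forall>a b::'a. norm (rip a b) \<le> norm a * norm b * K"
    by (rule exI[of _ 1]) (simp add: rip_bound)
qed

lemma rip_JJ: "rip (\<i> *\<^sub>C x) (\<i> *\<^sub>C y) = rip x (y::'a)"
  by (simp add: rip_def flip: scaleC_add_right scaleC_diff_right) (simp add: norm_scaleC)

lemma rip_J_left: "rip (\<i> *\<^sub>C x) y = - rip x (\<i> *\<^sub>C (y::'a))"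
proof -
  have "rip (\<i> *\<^sub>C x) y = rip (\<i> *\<^sub>C (\<i> *\<^sub>C x)) (\<i> *\<^sub>C y)" by (simp add: rip_JJ)
  also have "\<dots> = - rip x (\<i> *\<^sub>C y)" by (simp add: scaleC_ii rip_minus_left)
  finally show ?thesis .
qed

lemma rip_J_self: "rip x (\<i> *\<^sub>C (x::'a)) = 0"
  using rip_J_left[of x x] by (simp add: rip_sym)

end

lemma cinner_rip: "cinner x y = Complex (rip x y) (- rip x (\<i> *\<^sub>C y))"
proof -
  have s: "(\<Sum>k<(4::nat). f k) = f 0 + f 1 + f 2 + f 3" for f :: "nat \<Rightarrow> complex"
    by (simp add: eval_nat_numeral)
  have i3: "\<i> ^ 3 = - \<i>" by (simp add: eval_nat_numeral)
  have m3: "(-\<i>) ^ 3 = \<i>" by (simp add: eval_nat_numeral)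
  have e: "cinner x y = (1/4) * (complex_of_real ((norm (x+y))\<^sup>2) - \<i> * complex_of_real ((norm (x + \<i> *\<^sub>C y))\<^sup>2)
     - complex_of_real ((norm (x - y))\<^sup>2) + \<i> * complex_of_real ((norm (x - \<i> *\<^sub>C y))\<^sup>2))"
    unfolding cinner_def s by (simp add: i3 m3 scaleC_one scaleC_minus_one scaleC_mI)
  show ?thesis unfolding e by (simp add: complex_eq_iff rip_def field_simps)
qed



definition sqc :: "nat \<Rightarrow> real" where "sqc n = ((1/2::real) gchoose n) * (-1) ^ n"

lemma sqc_poch: "sqc n = pochhammer (-1/2) n / fact n"
  unfolding sqc_def gbinomial_pochhammer by (simp add: power_mult_distrib[symmetric])

lemma sqc_0: "sqc 0 = 1" by (simp add: sqc_def)
lemma sqc_1: "sqc 1 = -1/2" by (simp add: sqc_def)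

lemma sqc_nonpos: "n \<ge> 1 \<Longrightarrow> sqc n \<le> 0"
proof -
  assume "n \<ge> 1" then obtain m where n: "n = Suc m" by (cases n) auto
  have "pochhammer (-1/2::real) n = (-1/2) * pochhammer (1/2) m"
    unfolding n pochhammer_rec by simp
  moreover have "pochhammer (1/2::real) m > 0" by (rule pochhammer_pos) simp
  ultimately have "pochhammer (-1/2::real) n \<le> 0" by simp
  thus ?thesis unfolding sqc_poch by (simp add: divide_nonpos_pos)
qed

lemma sqc_psum_nonneg: "(\<Sum>k\<le>m. sqc k) \<ge> 0"
proof -
  have "(\<Sum>k\<le>m. sqc k) = (- 1) ^ m * ((1/2::real) - 1 gchoose m)"
    unfolding sqc_def by (rule gbinomial_sum_lower_neg)
  also have "\<dots> = pochhammer (1/2) m / fact m"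
    by (simp add: gbinomial_pochhammer power_mult_distrib[symmetric])
  also have "\<dots> \<ge> 0" by (simp add: pochhammer_nonneg)
  finally show ?thesis .
qed

lemma sqc_abs_psum: "(\<Sum>k\<le>m. \<bar>sqc k\<bar>) \<le> 2"
proof -
  have "(\<Sum>k\<le>m. \<bar>sqc k\<bar>) = 2 * sqc 0 - (\<Sum>k\<le>m. sqc k)"
  proof (induction m)
    case 0 then show ?case by (simp add: sqc_0)
  next
    case (Suc m)
    have "\<bar>sqc (Suc m)\<bar> = - sqc (Suc m)" using sqc_nonpos[of "Suc m"] by simp
    then show ?case using Suc by simp
  qed
  thus ?thesis using sqc_psum_nonneg[of m] by (simp add: sqc_0)
qed

lemma summable_abs_sqc: "summable (\<lambda>n. \<bar>sqc n\<bar>)"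
  by (rule bounded_imp_summable[where B=2]) (simp_all add: sqc_abs_psum)

lemma summable_sqc: "summable sqc"
  using summable_abs_sqc by (rule summable_rabs_cancel)

lemma suminf_sqc_nonneg: "suminf sqc \<ge> 0"
proof -
  have "(\<lambda>n. \<Sum>k<n. sqc k) \<longlonglongrightarrow> suminf sqc" using summable_sqc by (rule summable_LIMSEQ)
  moreover have "\<forall>n. (\<Sum>k<n. sqc k) \<ge> 0"
  proof
    fix n show "(\<Sum>k<n. sqc k) \<ge> 0"
    proof (cases n)
      case (Suc m) then show ?thesis using sqc_psum_nonneg[of m] by (simp add: lessThan_Suc_atMost)
    qed simp
  qed
  ultimately show ?thesis by (intro LIMSEQ_le_const) auto
qed

lemma sqc_cauchy: "(\<Sum>i\<le>k. sqc i * sqc (k - i)) = (if k = 0 then 1 else if k = 1 then -1 else 0)"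
proof -
  have "(\<Sum>i\<le>k. sqc i * sqc (k - i)) = (\<Sum>i=0..k. ((1/2::real) gchoose i) * ((1/2) gchoose (k - i))) * (-1)^k"
    unfolding sqc_def sum_distrib_right atMost_atLeast0
    by (rule sum.cong) (auto simp: power_add[symmetric])
  also have "\<dots> = ((1::real) gchoose k) * (-1)^k" by (simp add: gbinomial_Vandermonde)
  also have "\<dots> = of_nat (1 choose k) * (-1)^k" by (simp add: binomial_gbinomial)
  also have "\<dots> = (if k = 0 then 1 else if k = 1 then -1 else 0)"
    by (cases k) (auto simp: binomial_eq_0)
  finally show ?thesis .
qed



definition sym_op :: "('a::complex_normed_vector \<Rightarrow> 'a) \<Rightarrow> bool" where
  "sym_op A \<longleftrightarrow> (\<forall>x y. rip x (A y) = rip (A x) y)"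
definition pos_op :: "('a::complex_normed_vector \<Rightarrow> 'a) \<Rightarrow> bool" where
  "pos_op A \<longleftrightarrow> (\<forall>x. rip x (A x) \<ge> 0)"

definition Sq :: "('a::{complex_normed_vector,banach} \<Rightarrow> 'a) \<Rightarrow> 'a \<Rightarrow> 'a" where
  "Sq B x = (\<Sum>n. sqc n *\<^sub>R (B ^^ n) x)"

definition Pp :: "('a::{complex_normed_vector,banach} \<Rightarrow> 'a) \<Rightarrow> nat \<Rightarrow> 'a \<Rightarrow> 'a" where
  "Pp B N x = (\<Sum>n<N. sqc n *\<^sub>R (B ^^ n) x)"

lemma suminf_abs_sqc_le: "(\<Sum>n. \<bar>sqc n\<bar>) \<le> 2"
proof (rule suminf_le_const[OF summable_abs_sqc])
  fix n show "(\<Sum>i<n. \<bar>sqc i\<bar>) \<le> 2"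
  proof (cases n)
    case (Suc m) then show ?thesis using sqc_abs_psum[of m] by (simp add: lessThan_Suc_atMost)
  qed simp
qed

context
  fixes B :: "'a::{complex_normed_vector,banach} \<Rightarrow> 'a"
  assumes blB: "bounded_linear B" and nB: "\<And>x. norm (B x) \<le> norm x"
begin

lemma bl_pow: "bounded_linear (B ^^ n)"
  by (induction n) (simp_all add: bounded_linear_ident[unfolded id_def] bounded_linear_compose[OF blB])

lemma norm_pow: "norm ((B ^^ n) x) \<le> norm x"
  by (induction n) (auto intro: order_trans[OF nB])

lemma summable_Sq: "summable (\<lambda>n. sqc n *\<^sub>R (B ^^ n) x)"
proof (rule summable_comparison_test'[where g="\<lambda>n. \<bar>sqc n\<bar> * norm x" and N=0])
  show "summable (\<lambda>n. \<bar>sqc n\<bar> * norm x)" by (rule summable_mult2[OF summable_abs_sqc])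
  show "norm (sqc n *\<^sub>R (B ^^ n) x) \<le> \<bar>sqc n\<bar> * norm x" for n
    by (simp add: mult_left_mono norm_pow)
qed

lemma norm_Sq: "norm (Sq B x) \<le> 2 * norm x"
proof -
  have s: "summable (\<lambda>n. \<bar>sqc n\<bar> * norm x)" by (rule summable_mult2[OF summable_abs_sqc])
  have s2: "summable (\<lambda>n. norm (sqc n *\<^sub>R (B ^^ n) x))"
    by (rule summable_comparison_test'[OF s, where N=0]) (simp add: mult_left_mono norm_pow)
  then have "norm (Sq B x) \<le> (\<Sum>n. norm (sqc n *\<^sub>R (B ^^ n) x))" unfolding Sq_def by (rule summable_norm)
  also have "\<dots> \<le> (\<Sum>n. \<bar>sqc n\<bar> * norm x)"
    by (rule suminf_le[OF _ s2 s]) (simp add: mult_left_mono norm_pow)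
  also have "\<dots> = (\<Sum>n. \<bar>sqc n\<bar>) * norm x" by (rule suminf_mult2[symmetric, OF summable_abs_sqc])
  also have "\<dots> \<le> 2 * norm x" by (rule mult_right_mono[OF suminf_abs_sqc_le]) simp
  finally show ?thesis .
qed

lemma Sq_add: "Sq B (x + y) = Sq B x + Sq B y"
  unfolding Sq_def using suminf_add[OF summable_Sq[of x] summable_Sq[of y]]
  by (simp add: linear_add[OF bounded_linear.linear[OF bl_pow]] scaleR_add_right)

lemma Sq_scaleR: "Sq B (r *\<^sub>R x) = r *\<^sub>R Sq B x"
  unfolding Sq_def using suminf_scaleR_right[OF summable_Sq[of x], of r]
  by (simp add: linear_scale[OF bounded_linear.linear[OF bl_pow]] mult.commute)

lemma bl_Sq: "bounded_linear (Sq B)"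
  by (rule bounded_linear_intro[where K=2]) (simp_all add: Sq_add Sq_scaleR norm_Sq[unfolded mult.commute[of 2]])

lemma Sq_commute:
  assumes C: "bounded_linear C" and CB: "\<And>x. C (B x) = B (C x)"
  shows "C (Sq B x) = Sq B (C x)"
proof -
  have pw: "C ((B ^^ n) x) = (B ^^ n) (C x)" for n x by (induction n) (simp_all add: CB)
  show ?thesis unfolding Sq_def
    using bounded_linear.suminf[OF C summable_Sq[of x]]
    by (simp add: linear_scale[OF bounded_linear.linear[OF C]] pw)
qed

lemma Pp_tendsto: "(\<lambda>N. Pp B N x) \<longlonglongrightarrow> Sq B x"
  unfolding Pp_def Sq_def by (rule summable_LIMSEQ[OF summable_Sq])

lemma Pp_linear: "linear (Pp B N)"
  unfolding Pp_def
  by (rule linearI) (simp_all add: linear_add[OF bounded_linear.linear[OF bl_pow]] linear_scale[OF bounded_linear.linear[OF bl_pow]]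
        scaleR_add_right sum.distrib scaleR_sum_right mult.commute)

lemma Pp_norm: "norm (Pp B N x) \<le> 2 * norm x"
proof -
  have "norm (Pp B N x) \<le> (\<Sum>n<N. norm (sqc n *\<^sub>R (B ^^ n) x))" unfolding Pp_def by (rule norm_sum)
  also have "\<dots> \<le> (\<Sum>n<N. \<bar>sqc n\<bar> * norm x)" by (rule sum_mono) (simp add: mult_left_mono norm_pow)
  also have "\<dots> = (\<Sum>n<N. \<bar>sqc n\<bar>) * norm x" by (simp add: sum_distrib_right)
  also have "\<dots> \<le> 2 * norm x"
  proof (rule mult_right_mono)
    show "(\<Sum>n<N. \<bar>sqc n\<bar>) \<le> 2"
    proof (cases N)
      case (Suc m) then show ?thesis using sqc_abs_psum[of m] by (simp add: lessThan_Suc_atMost)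
    qed simp
  qed simp
  finally show ?thesis .
qed

lemma Sq_Sq: "Sq B (Sq B x) = x - B x"
proof -
  let ?S1 = "\<lambda>N::nat. {..<N} \<times> {..<N}"
  let ?S2 = "\<lambda>N::nat. {(i,j). i + j < N}"
  define f where "f = (\<lambda>(m,n). (sqc m * sqc n) *\<^sub>R (B ^^ (m + n)) x)"
  define g where "g = (\<lambda>(m::nat,n::nat). \<bar>sqc m\<bar> * \<bar>sqc n\<bar>)"
  have fin1: "finite (?S1 N)" for N by simp
  have sub: "?S2 N \<subseteq> ?S1 N" for N by auto
  have fin2: "finite (?S2 N)" for N by (rule finite_subset[OF sub fin1])
  have F1: "Pp B N (Pp B N x) = sum f (?S1 N)" for N
  proof -
    have "Pp B N (Pp B N x) = (\<Sum>m<N. sqc m *\<^sub>R (B ^^ m) (\<Sum>n<N. sqc n *\<^sub>R (B ^^ n) x))"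
      unfolding Pp_def ..
    also have "\<dots> = (\<Sum>m<N. \<Sum>n<N. (sqc m * sqc n) *\<^sub>R (B ^^ (m + n)) x)"
      by (simp add: linear_sum[OF bounded_linear.linear[OF bl_pow]] linear_scale[OF bounded_linear.linear[OF bl_pow]]
           scaleR_sum_right funpow_add)
    also have "\<dots> = sum f (?S1 N)" unfolding f_def by (simp add: sum.cartesian_product)
    finally show ?thesis .
  qed
  have F2: "sum f (?S2 N) = x - B x" if "N \<ge> 2" for N
  proof -
    have "sum f (?S2 N) = (\<Sum>k<N. \<Sum>i\<le>k. (sqc i * sqc (k - i)) *\<^sub>R (B ^^ k) x)"
      unfolding f_def by (subst sum.triangle_reindex) simp
    also have "\<dots> = (\<Sum>k<N. (\<Sum>i\<le>k. sqc i * sqc (k - i)) *\<^sub>R (B ^^ k) x)"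
      by (simp add: scaleR_sum_left)
    also have "\<dots> = (\<Sum>k<N. (if k = 0 then 1 else if k = 1 then -1 else 0) *\<^sub>R (B ^^ k) x)"
      by (simp add: sqc_cauchy)
    also have "\<dots> = x - B x" using that
    proof (induction N rule: dec_induct)
      case base then show ?case by (simp add: eval_nat_numeral)
    next
      case (step n)
      have "(\<Sum>k<Suc n. (if k = 0 then 1 else if k = 1 then -1 else 0) *\<^sub>R (B ^^ k) x) =
        (\<Sum>k<n. (if k = 0 then 1 else if k = 1 then -1 else 0) *\<^sub>R (B ^^ k) x) + (0::real) *\<^sub>R (B ^^ n) x"
        using step(1) by (simp only: sum.lessThan_Suc) simp
      then show ?case using step(3) by simp
    qed
    finally show ?thesis .
  qed
  have gsum: "summable (\<lambda>k. norm \<bar>sqc k\<bar>)" using summable_abs_sqc by simp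
  have G1: "(\<lambda>N. sum g (?S1 N)) \<longlonglongrightarrow> (\<Sum>k. \<bar>sqc k\<bar>) * (\<Sum>k. \<bar>sqc k\<bar>)"
  proof -
    have "(\<lambda>N. (\<Sum>k<N. \<bar>sqc k\<bar>) * (\<Sum>k<N. \<bar>sqc k\<bar>)) \<longlonglongrightarrow> (\<Sum>k. \<bar>sqc k\<bar>) * (\<Sum>k. \<bar>sqc k\<bar>)"
      by (intro tendsto_mult summable_LIMSEQ summable_abs_sqc)
    then show ?thesis unfolding g_def by (simp add: sum_product sum.cartesian_product)
  qed
  have G2: "(\<lambda>N. sum g (?S2 N)) \<longlonglongrightarrow> (\<Sum>k. \<bar>sqc k\<bar>) * (\<Sum>k. \<bar>sqc k\<bar>)"
  proof -
    have "(\<lambda>k. \<Sum>i\<le>k. \<bar>sqc i\<bar> * \<bar>sqc (k - i)\<bar>) sums ((\<Sum>k. \<bar>sqc k\<bar>) * (\<Sum>k. \<bar>sqc k\<bar>))"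
      by (rule Cauchy_product_sums[OF gsum gsum])
    then show ?thesis unfolding sums_def g_def by (simp add: sum.triangle_reindex)
  qed
  have G: "(\<lambda>N. norm x * (sum g (?S1 N) - sum g (?S2 N))) \<longlonglongrightarrow> 0"
    using tendsto_mult[OF tendsto_const[of "norm x"] tendsto_diff[OF G1 G2]] by simp
  have bound: "norm (Pp B N (Pp B N x) - sum f (?S2 N)) \<le> norm x * (sum g (?S1 N) - sum g (?S2 N))" for N
  proof -
    have "Pp B N (Pp B N x) - sum f (?S2 N) = sum f (?S1 N - ?S2 N)"
      by (simp add: F1 sum_diff[OF fin1 sub])
    also have "norm \<dots> \<le> (\<Sum>p\<in>?S1 N - ?S2 N. norm (f p))" by (rule norm_sum)
    also have "\<dots> \<le> (\<Sum>p\<in>?S1 N - ?S2 N. norm x * g p)"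
    proof (rule sum_mono)
      fix p assume "p \<in> ?S1 N - ?S2 N"
      obtain a b where p: "p = (a, b)" by (cases p)
      have "\<bar>sqc a\<bar> * \<bar>sqc b\<bar> * norm ((B ^^ (a + b)) x) \<le> \<bar>sqc a\<bar> * \<bar>sqc b\<bar> * norm x"
        by (rule mult_left_mono[OF norm_pow]) simp
      then show "norm (f p) \<le> norm x * g p" by (simp add: p f_def g_def abs_mult mult.commute)
    qed
    also have "\<dots> = norm x * (sum g (?S1 N) - sum g (?S2 N))"
      by (simp add: sum_distrib_left[symmetric] sum_diff[OF fin1 sub])
    finally show ?thesis .
  qed
  have D: "(\<lambda>N. Pp B N (Pp B N x) - sum f (?S2 N)) \<longlonglongrightarrow> 0"
    by (rule Lim_null_comparison[OF _ G]) (simp add: bound)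
  have E2: "(\<lambda>N. sum f (?S2 N)) \<longlonglongrightarrow> x - B x"
  proof (rule tendsto_eventually)
    show "\<forall>\<^sub>F N in sequentially. sum f (?S2 N) = x - B x"
      unfolding eventually_sequentially using F2 by blast
  qed
  have L1: "(\<lambda>N. Pp B N (Pp B N x)) \<longlonglongrightarrow> x - B x"
    using tendsto_add[OF D E2] by simp
  have L2: "(\<lambda>N. Pp B N (Pp B N x)) \<longlonglongrightarrow> Sq B (Sq B x)"
  proof -
    have a: "(\<lambda>N. Pp B N (Sq B x)) \<longlonglongrightarrow> Sq B (Sq B x)" by (rule Pp_tendsto)
    have b: "(\<lambda>N. Pp B N x - Sq B x) \<longlonglongrightarrow> 0" using Pp_tendsto[of x] by (simp add: LIM_zero)
    have c: "(\<lambda>N. Pp B N (Pp B N x) - Pp B N (Sq B x)) \<longlonglongrightarrow> 0"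
    proof (rule Lim_null_comparison)
      show "\<forall>\<^sub>F N in sequentially. norm (Pp B N (Pp B N x) - Pp B N (Sq B x)) \<le> 2 * norm (Pp B N x - Sq B x)"
      proof (intro always_eventually allI)
        fix N
        have "Pp B N (Pp B N x) - Pp B N (Sq B x) = Pp B N (Pp B N x - Sq B x)"
          by (rule linear_diff[OF Pp_linear, symmetric])
        then show "norm (Pp B N (Pp B N x) - Pp B N (Sq B x)) \<le> 2 * norm (Pp B N x - Sq B x)"
          using Pp_norm[of N "Pp B N x - Sq B x"] by simp
      qed
      show "(\<lambda>N. 2 * norm (Pp B N x - Sq B x)) \<longlonglongrightarrow> 0"
        using tendsto_mult[OF tendsto_const[of 2] tendsto_norm_zero[OF b]] by simp
    qed
    show ?thesis using tendsto_add[OF c a] by simp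
  qed
  show ?thesis using LIMSEQ_unique[OF L2 L1] .
qed

end


lemma quad_disc:
  fixes a b c :: real
  assumes c: "c \<ge> 0" and q: "\<And>t. 0 \<le> a + 2 * b * t + c * t\<^sup>2"
  shows "b\<^sup>2 \<le> a * c"
proof (cases "c = 0")
  case True
  show ?thesis
  proof (rule ccontr)
    assume "\<not> ?thesis"
    then have "b \<noteq> 0" using True by simp
    have "0 \<le> a + 2 * b * (-(a+1)/(2*b))" using q[of "-(a+1)/(2*b)"] True by simp
    also have "\<dots> = -1" using \<open>b \<noteq> 0\<close> by (simp add: field_simps)
    finally show False by simp
  qed
next
  case False
  then have cp: "c > 0" using c by simp
  have "0 \<le> a + 2 * b * (-b/c) + c * (-b/c)\<^sup>2" by (rule q)
  also have "\<dots> = a - b\<^sup>2 / c" using cp by (simp add: field_simps power2_eq_square)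
  finally show ?thesis using cp by (simp add: field_simps)
qed

context
  fixes T :: "'a::{complex_normed_vector,banach} itself"
  assumes hilb: "hilbert_norm TYPE('a)"
begin

lemma rip_scaleR_left': "rip (r *\<^sub>R x) y = r * rip x (y::'a)" by (rule rip_scaleR_left[OF hilb])
lemmas ripl = rip_add_left[OF hilb] rip_add_right[OF hilb] rip_scaleR_left[OF hilb] rip_scaleR_right[OF hilb]
  rip_minus_left[OF hilb] rip_minus_right[OF hilb] rip_diff_left[OF hilb] rip_diff_right[OF hilb]

lemma pos_CS:
  fixes A :: "'a \<Rightarrow> 'a"
  assumes bl: "bounded_linear A" and s: "sym_op A" and p: "pos_op A"
  shows "(rip x (A y))\<^sup>2 \<le> rip x (A x) * rip y (A y)"
proof -
  have lin: "A (x + t *\<^sub>R y) = A x + t *\<^sub>R A y" for t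
    using bl by (simp add: linear_add linear_scale bounded_linear.linear)
  have sy: "rip y (A x) = rip x (A y)" using s unfolding sym_op_def by (metis rip_sym)
  have "(rip x (A y))\<^sup>2 \<le> rip x (A x) * rip y (A y)"
  proof (rule quad_disc)
    show "0 \<le> rip y (A y)" using p unfolding pos_op_def by blast
    fix t
    have "0 \<le> rip (x + t *\<^sub>R y) (A (x + t *\<^sub>R y))" using p unfolding pos_op_def by blast
    also have "\<dots> = rip x (A x) + 2 * rip x (A y) * t + rip y (A y) * t\<^sup>2"
      unfolding lin by (simp add: ripl sy algebra_simps power2_eq_square)
    finally show "0 \<le> rip x (A x) + 2 * rip x (A y) * t + rip y (A y) * t\<^sup>2" .
  qed
  thus ?thesis .
qed

lemma pos_zero:
  fixes A :: "'a \<Rightarrow> 'a"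
  assumes bl: "bounded_linear A" and s: "sym_op A" and p: "pos_op A" and z: "rip y (A y) = 0"
  shows "A y = 0"
proof -
  have "(rip (A y) (A y))\<^sup>2 \<le> rip (A y) (A (A y)) * rip y (A y)" by (rule pos_CS[OF bl s p])
  then have "(norm (A y))^4 \<le> 0" using z by (simp add: rip_self)
  thus ?thesis by simp
qed

lemma pos_norm_bound:
  fixes A :: "'a \<Rightarrow> 'a"
  assumes bl: "bounded_linear A" and s: "sym_op A" and p: "pos_op A"
    and L: "\<And>v. norm (A v) \<le> L * norm v" and L0: "L \<ge> 0"
  shows "(norm (A x))\<^sup>2 \<le> L * rip x (A x)"
proof -
  have r0: "rip x (A x) \<ge> 0" using p unfolding pos_op_def by blast
  have cs: "(rip x (A (A x)))\<^sup>2 \<le> rip x (A x) * rip (A x) (A (A x))" by (rule pos_CS[OF bl s p])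
  have e: "rip x (A (A x)) = (norm (A x))\<^sup>2" using s unfolding sym_op_def by (simp add: rip_self)
  have "rip (A x) (A (A x)) \<le> norm (A x) * norm (A (A x))" using rip_bound[of "A x" "A (A x)"] by simp
  also have "\<dots> \<le> norm (A x) * (L * norm (A x))" by (rule mult_left_mono[OF L]) simp
  finally have u: "rip (A x) (A (A x)) \<le> L * (norm (A x))\<^sup>2" by (simp add: power2_eq_square mult_ac)
  have "((norm (A x))\<^sup>2)\<^sup>2 \<le> rip x (A x) * (L * (norm (A x))\<^sup>2)"
    using cs e mult_left_mono[OF u r0] by simp
  then show ?thesis
  proof (cases "norm (A x) = 0")
    case True
    then show ?thesis using L0 r0 by simp
  next
    case False
    then have pz: "(norm (A x))\<^sup>2 > 0" by simp
    have "(norm (A x))\<^sup>2 * (norm (A x))\<^sup>2 \<le> (L * rip x (A x)) * (norm (A x))\<^sup>2"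
      using \<open>((norm (A x))\<^sup>2)\<^sup>2 \<le> _\<close> by (simp add: power2_eq_square[of "(norm (A x))\<^sup>2"] mult_ac)
    then show ?thesis using pz by (rule mult_right_le_imp_le)
  qed
qed

lemma norm_diff_sq: "(norm (u - v))\<^sup>2 = (norm u)\<^sup>2 - 2 * rip u v + (norm (v::'a))\<^sup>2"
proof -
  have "(norm (u - v))\<^sup>2 = rip (u - v) (u - v)" by (simp add: rip_self)
  also have "\<dots> = rip u u - 2 * rip u v + rip v v" by (simp add: ripl rip_sym[of v u])
  finally show ?thesis by (simp add: rip_self)
qed

lemma sym_pow: "sym_op B \<Longrightarrow> sym_op ((B :: 'a \<Rightarrow> 'a) ^^ n)"
proof (induction n)
  case 0 then show ?case by (simp add: sym_op_def)
next
  case (Suc n)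
  show ?case unfolding sym_op_def
  proof (intro allI)
    fix x y
    have "rip x ((B ^^ Suc n) y) = rip x (B ((B ^^ n) y))" by simp
    also have "\<dots> = rip (B x) ((B ^^ n) y)" using Suc.prems unfolding sym_op_def by blast
    also have "\<dots> = rip ((B ^^ n) (B x)) y" using Suc.IH[OF Suc.prems] unfolding sym_op_def by blast
    also have "(B ^^ n) (B x) = (B ^^ Suc n) x" by (simp add: funpow_swap1)
    finally show "rip x ((B ^^ Suc n) y) = rip ((B ^^ Suc n) x) y" .
  qed
qed

context
  fixes B :: "'a \<Rightarrow> 'a"
  assumes blB: "bounded_linear B" and nB: "\<And>x. norm (B x) \<le> norm x"
begin

lemma rip_Sq_right: "rip x (Sq B y) = (\<Sum>n. sqc n * rip x ((B ^^ n) y))"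
  unfolding Sq_def
  using bounded_linear.suminf[OF bounded_bilinear.bounded_linear_right[OF bounded_bilinear_rip[OF hilb]] summable_Sq[OF blB nB]]
  by (simp add: ripl)

lemma summable_rip_Sq: "summable (\<lambda>n. sqc n * rip x ((B ^^ n) y))"
  using bounded_linear.summable[OF bounded_bilinear.bounded_linear_right[OF bounded_bilinear_rip[OF hilb]] summable_Sq[OF blB nB], of x y]
  by (simp add: ripl)

lemma sym_Sq: "sym_op B \<Longrightarrow> sym_op (Sq B)"
  unfolding sym_op_def
proof (intro allI)
  fix x y assume s: "\<forall>x y. rip x (B y) = rip (B x) y"
  have "rip x (Sq B y) = (\<Sum>n. sqc n * rip x ((B ^^ n) y))" by (rule rip_Sq_right)
  also have "\<dots> = (\<Sum>n. sqc n * rip y ((B ^^ n) x))"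
  proof -
    have sp: "sym_op (B ^^ n)" for n by (rule sym_pow) (simp add: sym_op_def s)
    have "rip x ((B ^^ n) y) = rip y ((B ^^ n) x)" for n
      using sp[of n] unfolding sym_op_def by (simp add: rip_sym[of "(B ^^ n) x"])
    then show ?thesis by simp
  qed
  also have "\<dots> = rip y (Sq B x)" by (rule rip_Sq_right[symmetric])
  finally show "rip x (Sq B y) = rip (Sq B x) y" by (simp add: rip_sym)
qed

lemma pos_Sq: "pos_op (Sq B)"
  unfolding pos_op_def
proof
  fix x
  have "(\<Sum>n. sqc n * (norm x)\<^sup>2) \<le> (\<Sum>n. sqc n * rip x ((B ^^ n) x))"
  proof (rule suminf_le)
    show "summable (\<lambda>n. sqc n * (norm x)\<^sup>2)" by (rule summable_mult2[OF summable_sqc])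
    show "summable (\<lambda>n. sqc n * rip x ((B ^^ n) x))" by (rule summable_rip_Sq)
    fix n show "sqc n * (norm x)\<^sup>2 \<le> sqc n * rip x ((B ^^ n) x)"
    proof (cases "n = 0")
      case True then show ?thesis by (simp add: rip_self)
    next
      case False
      then have sn: "sqc n \<le> 0" by (intro sqc_nonpos) simp
      have rn: "rip x ((B ^^ n) x) \<le> (norm x)\<^sup>2"
      proof -
        have "rip x ((B ^^ n) x) \<le> norm x * norm ((B ^^ n) x)" using rip_bound[of x "(B ^^ n) x"] by simp
        also have "\<dots> \<le> norm x * norm x" by (rule mult_left_mono[OF norm_pow[OF blB nB]]) simp
        finally show ?thesis by (simp add: power2_eq_square)
      qed
      show ?thesis by (rule mult_left_mono_neg[OF rn sn])
    qed
  qed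
  moreover have "(\<Sum>n. sqc n * (norm x)\<^sup>2) = suminf sqc * (norm x)\<^sup>2" by (rule suminf_mult2[symmetric, OF summable_sqc])
  moreover have "suminf sqc * (norm x)\<^sup>2 \<ge> 0" using suminf_sqc_nonneg by simp
  ultimately show "0 \<le> rip x (Sq B x)" by (simp add: rip_Sq_right)
qed

end

lemma sqrt_exists:
  fixes A :: "'a \<Rightarrow> 'a"
  assumes bl: "bounded_linear A" and s: "sym_op A" and p: "pos_op A"
  shows "\<exists>S. bounded_linear S \<and> sym_op S \<and> pos_op S \<and> (\<forall>x. S (S x) = A x) \<and>
     (\<forall>C. bounded_linear C \<longrightarrow> (\<forall>x. C (A x) = A (C x)) \<longrightarrow> (\<forall>x. C (S x) = S (C x)))"
proof -
  obtain K where K: "\<And>x. norm (A x) \<le> norm x * K" using bounded_linear.bounded[OF bl] by blast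
  define L where "L = \<bar>K\<bar> + 1"
  have Lp: "L > 0" by (simp add: L_def)
  have LA: "norm (A v) \<le> L * norm v" for v
    using K[of v] by (smt (verit, best) L_def mult.commute mult_right_mono norm_ge_zero)
  define B where "B x = x - (1/L) *\<^sub>R A x" for x
  have blB: "bounded_linear B" unfolding B_def
    by (intro bounded_linear_sub bounded_linear_ident bounded_linear_compose[OF bounded_linear_scaleR_right bl])
  have nB: "norm (B x) \<le> norm x" for x
  proof -
    let ?r = "rip x (A x)"
    have r0: "?r \<ge> 0" using p unfolding pos_op_def by blast
    have nb: "(norm (A x))\<^sup>2 \<le> L * ?r" by (rule pos_norm_bound[OF bl s p LA]) (use Lp in simp)
    have "(norm (B x))\<^sup>2 = (norm x)\<^sup>2 - 2 * ((1/L) * ?r) + (1/L)\<^sup>2 * (norm (A x))\<^sup>2"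
      unfolding B_def norm_diff_sq using Lp by (simp add: ripl power_mult_distrib power_divide)
    also have "\<dots> \<le> (norm x)\<^sup>2 - 2 * ((1/L) * ?r) + (1/L)\<^sup>2 * (L * ?r)"
      by (rule add_left_mono, rule mult_left_mono[OF nb]) simp
    also have "\<dots> = (norm x)\<^sup>2 - ?r / L" using Lp by (simp add: field_simps power2_eq_square)
    also have "\<dots> \<le> (norm x)\<^sup>2" using r0 Lp by simp
    finally show ?thesis by (rule power2_le_imp_le) simp
  qed
  have sB: "sym_op B" using s unfolding sym_op_def B_def by (simp add: ripl)
  define S where "S x = sqrt L *\<^sub>R Sq B x" for x
  have blS: "bounded_linear S" unfolding S_def by (rule bounded_linear_compose[OF bounded_linear_scaleR_right bl_Sq[OF blB nB]])
  have sS: "sym_op S" using sym_Sq[OF blB nB sB] unfolding sym_op_def S_def by (simp add: ripl)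
  have pS: "pos_op S" using pos_Sq[OF blB nB] Lp unfolding pos_op_def S_def by (simp add: ripl)
  have SS: "S (S x) = A x" for x
  proof -
    have "S (S x) = (sqrt L * sqrt L) *\<^sub>R Sq B (Sq B x)" unfolding S_def by (simp add: Sq_scaleR[OF blB nB])
    also have "\<dots> = L *\<^sub>R (x - B x)" using Lp by (simp add: Sq_Sq[OF blB nB])
    also have "\<dots> = A x" unfolding B_def using Lp by simp
    finally show ?thesis .
  qed
  have com: "C (S x) = S (C x)" if C: "bounded_linear C" and CA: "\<forall>x. C (A x) = A (C x)" for C x
  proof -
    have CB: "C (B x) = B (C x)" for x
      unfolding B_def using CA by (simp add: linear_diff linear_scale bounded_linear.linear[OF C])
    show ?thesis unfolding S_def using Sq_commute[OF blB nB C CB]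
      by (simp add: linear_scale bounded_linear.linear[OF C])
  qed
  show ?thesis using blS sS pS SS com by blast
qed

end


context
  fixes D :: "'a::{complex_normed_vector,banach} set" and T :: "'a \<Rightarrow> 'a"
  assumes lo: "lin_op D T"
begin

lemma lo_0: "0 \<in> D" using lo unfolding lin_op_def by blast
lemma lo_add: "x \<in> D \<Longrightarrow> y \<in> D \<Longrightarrow> x + y \<in> D" using lo unfolding lin_op_def by blast
lemma lo_scaleC: "x \<in> D \<Longrightarrow> c *\<^sub>C x \<in> D" using lo unfolding lin_op_def by blast
lemma lo_T_add: "x \<in> D \<Longrightarrow> y \<in> D \<Longrightarrow> T (x + y) = T x + T y" using lo unfolding lin_op_def by blast
lemma lo_T_scaleC: "x \<in> D \<Longrightarrow> T (c *\<^sub>C x) = c *\<^sub>C T x" using lo unfolding lin_op_def by blast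
lemma lo_scaleR: "x \<in> D \<Longrightarrow> r *\<^sub>R x \<in> D" using lo_scaleC[of x "of_real r"] by (simp add: scaleC_of_real)
lemma lo_T_scaleR: "x \<in> D \<Longrightarrow> T (r *\<^sub>R x) = r *\<^sub>R T x" using lo_T_scaleC[of x "of_real r"] by (simp add: scaleC_of_real)
lemma lo_minus: "x \<in> D \<Longrightarrow> - x \<in> D" using lo_scaleR[of x "-1"] by simp
lemma lo_T_minus: "x \<in> D \<Longrightarrow> T (- x) = - T x" using lo_T_scaleR[of x "-1"] by simp
lemma lo_diff: "x \<in> D \<Longrightarrow> y \<in> D \<Longrightarrow> x - y \<in> D" using lo_add[of x "-y"] lo_minus[of y] by simp
lemma lo_T_diff: "x \<in> D \<Longrightarrow> y \<in> D \<Longrightarrow> T (x - y) = T x - T y"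
  using lo_T_add[of x "-y"] lo_minus[of y] lo_T_minus[of y] by simp
lemma lo_T_0: "T 0 = 0" using lo_T_scaleR[OF lo_0, of 0] by simp

end

context
  fixes TT :: "'a::{complex_normed_vector,banach} itself"
  assumes hilb: "hilbert_norm TYPE('a)"
begin

lemma bl_rip_right: "bounded_linear (\<lambda>y. rip a (y::'a))"
  by (rule bounded_bilinear.bounded_linear_right[OF bounded_bilinear_rip[OF hilb]])
lemma bl_rip_left: "bounded_linear (\<lambda>y. rip (y::'a) a)"
  by (rule bounded_bilinear.bounded_linear_left[OF bounded_bilinear_rip[OF hilb]])

lemma tendsto_cinner_right:
  assumes "(f \<longlongrightarrow> (y::'a)) F"
  shows "((\<lambda>n. cinner a (f n)) \<longlongrightarrow> cinner a y) F"
proof -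
  have 1: "((\<lambda>n. rip a (f n)) \<longlongrightarrow> rip a y) F"
    by (rule bounded_linear.tendsto[OF bl_rip_right assms])
  have 2: "((\<lambda>n. \<i> *\<^sub>C f n) \<longlongrightarrow> \<i> *\<^sub>C y) F"
    by (rule bounded_linear.tendsto[OF bounded_linear_scaleC assms])
  have 3: "((\<lambda>n. rip a (\<i> *\<^sub>C f n)) \<longlongrightarrow> rip a (\<i> *\<^sub>C y)) F"
    by (rule bounded_linear.tendsto[OF bl_rip_right 2])
  show ?thesis unfolding cinner_rip by (intro tendsto_Complex 1 tendsto_minus 3)
qed

lemma Re_cinner: "Re (cinner x y) = rip x y" by (simp add: cinner_rip)
lemma Im_cinner: "Im (cinner x y) = - rip x (\<i> *\<^sub>C y)" by (simp add: cinner_rip)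
lemma cinner_0_right: "cinner x (0::'a) = 0" by (simp add: cinner_rip scaleC_zero_right complex_eq_iff)

lemma rip_J_right: "rip a (\<i> *\<^sub>C b) = - rip (\<i> *\<^sub>C a) (b::'a)"
  using rip_J_left[OF hilb, of a b] by simp

lemma rip_zero_dense:
  assumes dense: "closure D = UNIV" and z: "\<And>z. z \<in> D \<Longrightarrow> rip z u = 0"
  shows "u = (0::'a)"
proof -
  have "u \<in> closure D" using dense by simp
  then obtain s where s: "\<And>n. s n \<in> D" "s \<longlonglongrightarrow> u" unfolding closure_sequential by blast
  have "(\<lambda>n. rip (s n) u) \<longlonglongrightarrow> rip u u" by (rule bounded_linear.tendsto[OF bl_rip_left s(2)])
  moreover have "(\<lambda>n. rip (s n) u) = (\<lambda>n. 0)" using z s(1) by auto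
  ultimately have "rip u u = 0" using LIMSEQ_unique[OF tendsto_const] by metis
  thus ?thesis by (simp add: rip_self)
qed

lemma proj_exists:
  fixes V :: "'a set"
  assumes cl: "closed V" and ne: "V \<noteq> {}" and mid: "\<And>a b. a \<in> V \<Longrightarrow> b \<in> V \<Longrightarrow> (1/2) *\<^sub>R (a + b) \<in> V"
  shows "\<exists>p\<in>V. \<forall>v\<in>V. norm (y - p) \<le> norm (y - v)"
proof -
  define d where "d = infdist y V"
  have d0: "d \<ge> 0" unfolding d_def by (rule infdist_nonneg)
  have dle: "d \<le> norm (y - v)" if "v \<in> V" for v
    using infdist_le[OF that, of y] by (simp add: d_def dist_norm)
  have ex: "\<exists>v\<in>V. norm (y - v) < d + e" if "e > 0" for e
  proof -
    have "d < d + e" using that by simp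
    then have "(INF a\<in>V. dist y a) < d + e" unfolding d_def infdist_notempty[OF ne] .
    then obtain v where "v \<in> V" "dist y v < d + e" using ne by (subst (asm) cINF_less_iff) auto
    then show ?thesis by (auto simp: dist_norm)
  qed
  have "\<forall>n. \<exists>v. v \<in> V \<and> norm (y - v) < d + 1 / (real n + 1)"
    using ex by (simp add: Bex_def)
  then obtain v where vV: "\<And>n. v n \<in> V" and vd: "\<And>n. norm (y - v n) < d + 1 / (real n + 1)"
    by metis
  define E where "E = 2 * d + 1"
  have E0: "E > 0" using d0 by (simp add: E_def)
  have sq: "(norm (y - v n))\<^sup>2 \<le> d\<^sup>2 + E / (real n + 1)" for n
  proof -
    let ?t = "1 / (real n + 1)"
    have t1: "?t \<le> 1" "?t > 0" by (auto simp: field_simps)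
    have "(norm (y - v n))\<^sup>2 \<le> (d + ?t)\<^sup>2"
      using vd[of n] by (intro power_mono) auto
    also have "\<dots> = d\<^sup>2 + ?t * (2 * d + ?t)" by (simp add: power2_eq_square algebra_simps)
    also have "\<dots> \<le> d\<^sup>2 + ?t * E" unfolding E_def using t1 d0
      by (intro add_left_mono mult_left_mono) auto
    finally show ?thesis by simp
  qed
  have cau: "(norm (v m - v n))\<^sup>2 \<le> 2 * E / (real m + 1) + 2 * E / (real n + 1)" for m n
  proof -
    have pl: "(norm ((y - v m) + (y - v n)))\<^sup>2 + (norm ((y - v m) - (y - v n)))\<^sup>2
       = 2 * (norm (y - v m))\<^sup>2 + 2 * (norm (y - v n))\<^sup>2"
      using hilb unfolding hilbert_norm_def by blast
    have "(y - v m) + (y - v n) = 2 *\<^sub>R (y - (1/2) *\<^sub>R (v m + v n))" by (simp add: algebra_simps scaleR_2)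
    then have "norm ((y - v m) + (y - v n)) = 2 * norm (y - (1/2) *\<^sub>R (v m + v n))" by simp
    moreover have "d \<le> norm (y - (1/2) *\<^sub>R (v m + v n))" by (rule dle[OF mid[OF vV vV]])
    ultimately have P: "(2 * d)\<^sup>2 \<le> (norm ((y - v m) + (y - v n)))\<^sup>2"
      using d0 by (intro power_mono) auto
    have "(y - v m) - (y - v n) = - (v m - v n)" by simp
    then have Q: "(norm ((y - v m) - (y - v n)))\<^sup>2 = (norm (v m - v n))\<^sup>2" by (simp add: norm_minus_commute)
    have d4: "(2 * d)\<^sup>2 = 4 * d\<^sup>2" by (simp add: power2_eq_square)
    have e1: "2 * (E / (real m + 1)) = 2 * E / (real m + 1)" "2 * (E / (real n + 1)) = 2 * E / (real n + 1)" by simp_all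
    show ?thesis using pl Q P d4 sq[of m] sq[of n] e1 by linarith
  qed
  have "Cauchy v"
  proof (rule CauchyI)
    fix e :: real assume e: "e > 0"
    obtain N :: nat where N: "4 * E / e\<^sup>2 < real N" using reals_Archimedean2 by blast
    have Np: "4 * E / (real N + 1) < e\<^sup>2" using N e E0 by (simp add: field_simps) (smt (verit) zero_less_power)
    show "\<exists>M. \<forall>m\<ge>M. \<forall>n\<ge>M. norm (v m - v n) < e"
    proof (intro exI allI impI)
      fix m n assume mn: "N \<le> m" "N \<le> n"
      have a: "2 * E / (real m + 1) \<le> 2 * E / (real N + 1)" using mn E0 by (intro divide_left_mono) auto
      have b: "2 * E / (real n + 1) \<le> 2 * E / (real N + 1)" using mn E0 by (intro divide_left_mono) auto
      have "(norm (v m - v n))\<^sup>2 < e\<^sup>2" using cau[of m n] a b Np by simp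
      then show "norm (v m - v n) < e" using e by (smt (verit) power_mono norm_ge_zero)
    qed
  qed
  then obtain p where p: "v \<longlonglongrightarrow> p" using Cauchy_convergent_iff convergent_def by blast
  have pV: "p \<in> V" using cl vV p closed_sequential_limits by blast
  have "norm (y - p) \<le> d"
  proof -
    have "(\<lambda>n. norm (y - v n)) \<longlonglongrightarrow> norm (y - p)" by (intro tendsto_intros p)
    moreover have "(\<lambda>n. d + 1 / (real n + 1)) \<longlonglongrightarrow> d + 0"
    proof (intro tendsto_intros)
      have "(\<lambda>n. 1 / (real n + 1)) = (\<lambda>n. inverse (real (Suc n)))" by (simp add: inverse_eq_divide add.commute)
      then show "(\<lambda>n. 1 / (real n + 1)) \<longlonglongrightarrow> 0" using LIMSEQ_inverse_real_of_nat by simp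
    qed
    ultimately show ?thesis using vd by (intro LIMSEQ_le) (auto intro: less_imp_le)
  qed
  then show ?thesis using pV dle by (meson order_trans)
qed

lemma proj_orth:
  fixes V :: "'a set"
  assumes pV: "p \<in> V" and min: "\<forall>v\<in>V. norm (y - p) \<le> norm (y - v)"
    and sub: "\<And>v t. v \<in> V \<Longrightarrow> p + t *\<^sub>R v \<in> V" and vV: "v \<in> V"
  shows "rip (y - p) v = 0"
proof -
  let ?u = "y - p"
  have "(- rip ?u v)\<^sup>2 \<le> 0 * (norm v)\<^sup>2"
  proof (rule quad_disc)
    show "0 \<le> (norm v)\<^sup>2" by simp
    fix t
    have "norm ?u \<le> norm (y - (p + t *\<^sub>R v))" using min sub[OF vV] by blast
    then have "(norm ?u)\<^sup>2 \<le> (norm (?u - t *\<^sub>R v))\<^sup>2" by (intro power_mono) (auto simp: algebra_simps)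
    also have "\<dots> = (norm ?u)\<^sup>2 - 2 * (t * rip ?u v) + t\<^sup>2 * (norm v)\<^sup>2"
      by (simp add: norm_diff_sq[OF hilb] rip_scaleR_right[OF hilb] power_mult_distrib)
    finally show "0 \<le> 0 + 2 * (- rip ?u v) * t + (norm v)\<^sup>2 * t\<^sup>2" by (simp add: algebra_simps)
  qed
  thus ?thesis by simp
qed

end



context
  fixes D :: "'a::{complex_normed_vector,banach} set" and T :: "'a \<Rightarrow> 'a"
  assumes hilb: "hilbert_norm TYPE('a)" and sa: "self_adjoint_op D T" and ge: "op_ge D T 1"
begin

lemma lo: "lin_op D T" using sa unfolding self_adjoint_op_def by blast
lemma dense: "closure D = UNIV" using sa unfolding self_adjoint_op_def by blast
lemma adj: "(\<exists>z. \<forall>x\<in>D. cinner (T x) y = cinner x z) \<Longrightarrow> y \<in> D"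
  using sa unfolding self_adjoint_op_def by blast
lemma symm: "x \<in> D \<Longrightarrow> y \<in> D \<Longrightarrow> cinner (T x) y = cinner x (T y)"
  using sa unfolding self_adjoint_op_def by blast
lemma sa_rip: "x \<in> D \<Longrightarrow> y \<in> D \<Longrightarrow> rip (T x) y = rip x (T y)"
  using symm[of x y] by (simp add: cinner_rip complex_eq_iff)
lemma lb: "x \<in> D \<Longrightarrow> (norm x)\<^sup>2 \<le> rip x (T x)"
  using ge unfolding op_ge_def by (simp add: cinner_rip)
lemma nT: "x \<in> D \<Longrightarrow> norm x \<le> norm (T x)"
proof -
  assume x: "x \<in> D"
  have "(norm x)\<^sup>2 \<le> norm x * norm (T x)" using lb[OF x] rip_bound[of x "T x"] by linarith
  then show ?thesis by (cases "norm x = 0") (auto simp: power2_eq_square)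
qed
lemma injT: "x \<in> D \<Longrightarrow> y \<in> D \<Longrightarrow> T x = T y \<Longrightarrow> x = y"
proof -
  assume xy: "x \<in> D" "y \<in> D" "T x = T y"
  have "norm (x - y) \<le> norm (T (x - y))" by (rule nT[OF lo_diff[OF lo xy(1) xy(2)]])
  also have "T (x - y) = 0" using lo_T_diff[OF lo xy(1) xy(2)] xy(3) by simp
  finally show "x = y" by simp
qed

lemma closedT:
  assumes xD: "\<And>n. x n \<in> D" and xl: "x \<longlonglongrightarrow> l" and Tl: "(\<lambda>n. T (x n)) \<longlonglongrightarrow> w"
  shows "l \<in> D \<and> T l = w"
proof -
  have eq: "cinner (T z) l = cinner z w" if z: "z \<in> D" for z
  proof -
    have "(\<lambda>n. cinner (T z) (x n)) \<longlonglongrightarrow> cinner (T z) l" by (rule tendsto_cinner_right[OF hilb xl])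
    moreover have "(\<lambda>n. cinner (T z) (x n)) = (\<lambda>n. cinner z (T (x n)))" using symm[OF z xD] by simp
    moreover have "(\<lambda>n. cinner z (T (x n))) \<longlonglongrightarrow> cinner z w" by (rule tendsto_cinner_right[OF hilb Tl])
    ultimately show ?thesis using LIMSEQ_unique by metis
  qed
  have lD: "l \<in> D" using eq by (intro adj) blast
  have "rip z (T l - w) = 0" if z: "z \<in> D" for z
  proof -
    have "cinner z (T l) = cinner z w" using eq[OF z] symm[OF z lD] by simp
    then have "rip z (T l) = rip z w" by (simp add: cinner_rip complex_eq_iff)
    then show ?thesis by (simp add: rip_diff_right[OF hilb])
  qed
  then have "T l - w = 0" by (intro rip_zero_dense[OF hilb dense])
  then show ?thesis using lD by simp
qed

lemma range_closed: "closed (T ` D)"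
  unfolding closed_sequential_limits
proof (intro allI impI)
  fix y l assume a: "(\<forall>n. y n \<in> T ` D) \<and> y \<longlonglongrightarrow> l"
  then have "\<forall>n. \<exists>x. x \<in> D \<and> y n = T x" by blast
  then obtain x where xD: "\<And>n. x n \<in> D" and yx: "\<And>n. y n = T (x n)" by metis
  have cy: "Cauchy y" using a by (intro LIMSEQ_imp_Cauchy) blast
  have "Cauchy x"
  proof (rule CauchyI)
    fix e :: real assume e: "e > 0"
    obtain M where M: "\<forall>m\<ge>M. \<forall>n\<ge>M. norm (y m - y n) < e" using CauchyD[OF cy e] by blast
    show "\<exists>M. \<forall>m\<ge>M. \<forall>n\<ge>M. norm (x m - x n) < e"
    proof (intro exI allI impI)
      fix m n assume "M \<le> m" "M \<le> n"
      then have "norm (y m - y n) < e" using M by blast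
      moreover have "norm (x m - x n) \<le> norm (y m - y n)"
        using nT[OF lo_diff[OF lo xD xD]] lo_T_diff[OF lo xD xD] yx by simp
      ultimately show "norm (x m - x n) < e" by simp
    qed
  qed
  then obtain x0 where x0: "x \<longlonglongrightarrow> x0" using Cauchy_convergent_iff convergent_def by blast
  have "(\<lambda>n. T (x n)) = y" using yx by auto
  then have "(\<lambda>n. T (x n)) \<longlonglongrightarrow> l" using a by simp
  then have "x0 \<in> D \<and> T x0 = l" by (rule closedT[OF xD x0])
  then show "l \<in> T ` D" by blast
qed

lemma surjT: "y \<in> T ` D"
proof -
  let ?V = "T ` D"
  have ne: "?V \<noteq> {}" using lo_0[OF lo] by blast
  have mid: "(1/2) *\<^sub>R (a + b) \<in> ?V" if ab: "a \<in> ?V" "b \<in> ?V" for a b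
  proof -
    obtain x1 x2 where "x1 \<in> D" "x2 \<in> D" "a = T x1" "b = T x2" using ab by blast
    then show ?thesis
      by (metis image_eqI lo_T_add[OF lo] lo_T_scaleR[OF lo] lo_add[OF lo] lo_scaleR[OF lo])
  qed
  obtain p where pV: "p \<in> ?V" and pmin: "\<forall>v\<in>?V. norm (y - p) \<le> norm (y - v)"
    using proj_exists[OF hilb range_closed ne mid] by blast
  have sub: "p + t *\<^sub>R v \<in> ?V" if vv: "v \<in> ?V" for v t
  proof -
    obtain x1 x2 where "x1 \<in> D" "x2 \<in> D" "p = T x1" "v = T x2" using vv pV by blast
    then show ?thesis
      by (metis image_eqI lo_T_add[OF lo] lo_T_scaleR[OF lo] lo_add[OF lo] lo_scaleR[OF lo])
  qed
  let ?u = "y - p"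
  have orth: "rip ?u v = 0" if "v \<in> ?V" for v by (rule proj_orth[OF hilb pV pmin sub that])
  have "?u \<in> D"
  proof (rule adj, intro exI ballI)
    fix z assume z: "z \<in> D"
    have "rip (T z) ?u = 0" using orth[of "T z"] z by (simp add: rip_sym)
    moreover have "rip (T z) (\<i> *\<^sub>C ?u) = 0"
    proof -
      have "rip (T z) (\<i> *\<^sub>C ?u) = - rip (\<i> *\<^sub>C T z) ?u" by (rule rip_J_right[OF hilb])
      also have "\<i> *\<^sub>C T z = T (\<i> *\<^sub>C z)" using lo_T_scaleC[OF lo z] by simp
      also have "rip (T (\<i> *\<^sub>C z)) ?u = 0" using orth[of "T (\<i> *\<^sub>C z)"] lo_scaleC[OF lo z] by (simp add: rip_sym)
      finally show ?thesis by simp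
    qed
    ultimately show "cinner (T z) ?u = cinner z 0" by (simp add: cinner_rip complex_eq_iff scaleC_zero_right)
  qed
  then have "(norm ?u)\<^sup>2 \<le> rip ?u (T ?u)" by (rule lb)
  also have "rip ?u (T ?u) = 0" using orth[of "T ?u"] \<open>?u \<in> D\<close> by simp
  finally have "?u = 0" by simp
  then show ?thesis using pV by simp
qed

definition "Rs y = (THE x. x \<in> D \<and> T x = y)"

lemma Rs: "Rs y \<in> D \<and> T (Rs y) = y"
proof -
  obtain x where "x \<in> D" "T x = y" using surjT[of y] by blast
  then have "\<exists>!x. x \<in> D \<and> T x = y" using injT by blast
  then show ?thesis unfolding Rs_def by (rule theI')
qed
lemma Rs_D: "Rs y \<in> D" using Rs by blast
lemma T_Rs: "T (Rs y) = y" using Rs by blast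
lemma Rs_T: "x \<in> D \<Longrightarrow> Rs (T x) = x" using injT[OF Rs_D] T_Rs by blast

lemma Rs_add: "Rs (a + b) = Rs a + Rs b"
  using Rs_T[OF lo_add[OF lo Rs_D Rs_D]] lo_T_add[OF lo Rs_D Rs_D] T_Rs by metis
lemma Rs_scaleC: "Rs (c *\<^sub>C a) = c *\<^sub>C Rs a"
  using Rs_T[OF lo_scaleC[OF lo Rs_D]] lo_T_scaleC[OF lo Rs_D] T_Rs by metis
lemma Rs_scaleR: "Rs (r *\<^sub>R a) = r *\<^sub>R Rs a"
  using Rs_scaleC[of "of_real r" a] by (simp add: scaleC_of_real)
lemma Rs_norm: "norm (Rs y) \<le> norm y" using nT[OF Rs_D] T_Rs by metis
lemma bl_Rs: "bounded_linear Rs"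
  by (rule bounded_linear_intro[where K=1]) (simp_all add: Rs_add Rs_scaleR Rs_norm)
lemma sym_Rs: "sym_op Rs"
  unfolding sym_op_def
proof (intro allI)
  fix x y
  have "rip x (Rs y) = rip (T (Rs x)) (Rs y)" by (simp add: T_Rs)
  also have "\<dots> = rip (Rs x) (T (Rs y))" by (rule sa_rip[OF Rs_D Rs_D])
  finally show "rip x (Rs y) = rip (Rs x) y" by (simp add: T_Rs)
qed
lemma pos_Rs: "pos_op Rs"
  unfolding pos_op_def
proof
  fix y
  have "rip y (Rs y) = rip (T (Rs y)) (Rs y)" by (simp add: T_Rs)
  also have "\<dots> = rip (Rs y) (T (Rs y))" by (simp add: rip_sym)
  also have "\<dots> \<ge> (norm (Rs y))\<^sup>2" by (rule lb[OF Rs_D])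
  finally show "0 \<le> rip y (Rs y)" by (smt (verit) zero_le_power2)
qed
lemma Rs_inj: "Rs y = 0 \<Longrightarrow> y = 0"
  using T_Rs[of y] lo_T_0[OF lo] by simp

lemma inv_sqrt_char:
  "\<exists>S. inv_sqrt_op D T = S \<and> bounded_linear S \<and> sym_op S \<and> (\<forall>x. S (S x) = Rs x)"
proof -
  obtain S where blS: "bounded_linear S" and sS: "sym_op S" and pS: "pos_op S" and SS: "\<And>x. S (S x) = Rs x"
    and com: "\<And>C. bounded_linear C \<Longrightarrow> (\<forall>x. C (Rs x) = Rs (C x)) \<Longrightarrow> (\<forall>x. C (S x) = S (C x))"
    using sqrt_exists[OF hilb bl_Rs sym_Rs pos_Rs] by blast
  have JS: "\<i> *\<^sub>C S x = S (\<i> *\<^sub>C x)" for x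
  proof -
    have "\<forall>x. \<i> *\<^sub>C Rs x = Rs (\<i> *\<^sub>C x)" by (simp add: Rs_scaleC)
    then show ?thesis using com[OF bounded_linear_scaleC] by blast
  qed
  let ?P = "\<lambda>S. bounded_linear S
      \<and> (\<forall>x. cinner x (S x) \<in> \<real> \<and> Re (cinner x (S x)) \<ge> 0)
      \<and> (\<forall>x. S (S x) \<in> D \<and> T (S (S x)) = x)"
  have PS: "?P S"
  proof (intro conjI allI blS)
    fix x
    have "rip x (S (\<i> *\<^sub>C x)) = rip (S x) (\<i> *\<^sub>C x)" using sS unfolding sym_op_def by blast
    also have "\<dots> = - rip (\<i> *\<^sub>C S x) x" by (rule rip_J_right[OF hilb])
    also have "\<dots> = - rip x (S (\<i> *\<^sub>C x))" by (simp add: JS rip_sym)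
    finally have "rip x (S (\<i> *\<^sub>C x)) = 0" by simp
    then show "cinner x (S x) \<in> \<real>" by (simp add: complex_is_Real_iff cinner_rip JS)
    show "Re (cinner x (S x)) \<ge> 0" using pS unfolding pos_op_def by (simp add: cinner_rip)
    show "S (S x) \<in> D" by (simp add: SS Rs_D)
    show "T (S (S x)) = x" by (simp add: SS T_Rs)
  qed
  have uniq: "S' = S" if P': "?P S'" for S'
  proof
    fix x
    have blS': "bounded_linear S'" using P' by blast
    have pS': "rip v (S' v) \<ge> 0" for v using P' by (simp add: cinner_rip)
    have S'S': "S' (S' v) = Rs v" for v using P' Rs_T by metis
    have c1: "\<forall>v. S' (Rs v) = Rs (S' v)" using S'S' by metis
    have c2: "S' (S v) = S (S' v)" for v using com[OF blS' c1] by blast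
    let ?y = "S' x - S x"
    have sum0: "S' ?y + S ?y = 0"
      using linear_diff[OF bounded_linear.linear[OF blS']] linear_diff[OF bounded_linear.linear[OF blS]]
      by (simp add: S'S' SS c2)
    then have "rip ?y (S' ?y) + rip ?y (S ?y) = 0" by (metis rip_add_right[OF hilb] rip_0_right)
    moreover have "rip ?y (S ?y) \<ge> 0" using pS unfolding pos_op_def by blast
    ultimately have "rip ?y (S ?y) = 0" using pS'[of ?y] by linarith
    then have "S ?y = 0" by (rule pos_zero[OF hilb blS sS pS])
    then have "Rs ?y = 0" using SS[of ?y] linear_0[OF bounded_linear.linear[OF blS]] by simp
    then have "?y = 0" by (rule Rs_inj)
    then show "S' x = S x" by simp
  qed
  have "inv_sqrt_op D T = S" unfolding inv_sqrt_op_def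
  proof (rule the_equality)
    show "?P S" by (rule PS)
    show "S' = S" if "?P S'" for S' by (rule uniq[OF that])
  qed
  then show ?thesis using blS sS SS by blast
qed

end



lemma inv_sqrt_props:
  fixes D :: "'a::{complex_normed_vector,banach} set" and T :: "'a \<Rightarrow> 'a"
  assumes hilb: "hilbert_norm TYPE('a)" and sa: "self_adjoint_op D T" and ge: "op_ge D T 1"
  shows "\<exists>S. inv_sqrt_op D T = S \<and> bounded_linear S \<and> sym_op S \<and>
     (\<forall>x. S (S x) \<in> D \<and> T (S (S x)) = x) \<and> (\<forall>z\<in>D. S (S (T z)) = z)"
proof -
  obtain S where "inv_sqrt_op D T = S" "bounded_linear S" "sym_op S" and SS: "\<forall>x. S (S x) = Rs D T x"
    using inv_sqrt_char[OF hilb sa ge] by blast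
  moreover have "\<forall>x. S (S x) \<in> D \<and> T (S (S x)) = x" using SS Rs_D[OF hilb sa ge] T_Rs[OF hilb sa ge] by simp
  moreover have "\<forall>z\<in>D. S (S (T z)) = z" using SS Rs_T[OF hilb sa ge] by simp
  ultimately show ?thesis by blast
qed

lemma g_bound:
  fixes g :: "real \<Rightarrow> real"
  assumes g_C1: "g C1_differentiable_on UNIV"
    and g_supp: "closure {s. deriv g s \<noteq> 0} \<subseteq> {0<..<1}"
    and g_neg: "\<And>s. s < 0 \<Longrightarrow> g s = 0"
    and M_def: "M = (SUP s\<in>{0..1}. \<bar>g s\<bar>)"
  shows "\<bar>g s\<bar> \<le> M"
proof -
  obtain D' where der: "\<And>x. (g has_vector_derivative D' x) (at x)"
    using g_C1 unfolding C1_differentiable_on_def by blast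
  have derR: "DERIV g x :> deriv g x" for x
    using der[of x] DERIV_imp_deriv by (metis has_real_derivative_iff_has_vector_derivative)
  have cont: "continuous_on UNIV g"
    by (rule differentiable_imp_continuous_on[OF C1_diff_imp_diff[OF g_C1]])
  have bdd: "bdd_above ((\<lambda>s. \<bar>g s\<bar>) ` {0..1})"
  proof -
    have "compact ((\<lambda>s. \<bar>g s\<bar>) ` {0..1::real})"
      by (rule compact_continuous_image) (auto intro!: continuous_intros continuous_on_subset[OF cont])
    then show ?thesis by (intro bounded_imp_bdd_above compact_imp_bounded)
  qed
  have in01: "\<bar>g s\<bar> \<le> M" if "s \<in> {0..1}" for s
    unfolding M_def by (rule cSUP_upper[OF that bdd])
  show ?thesis
  proof (cases "s < 0")
    case True then show ?thesis using in01[of 0] g_neg[OF True] by simp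
  next
    case False
    show ?thesis
    proof (cases "s \<le> 1")
      case True then show ?thesis using False in01 by simp
    next
      case s1: False
      have d0: "deriv g z = 0" if "1 \<le> z" for z
      proof (rule ccontr)
        assume "deriv g z \<noteq> 0"
        then have "z \<in> {s. deriv g s \<noteq> 0}" by simp
        then have "z \<in> closure {s. deriv g s \<noteq> 0}" using closure_subset by (rule subsetD[rotated])
        then have "z \<in> {0<..<1}" using g_supp by (rule subsetD[rotated])
        then show False using that by simp
      qed
      obtain z where z: "1 < z" "z < s" "g s - g 1 = (s - 1) * deriv g z"
        using MVT2[of 1 s g "deriv g"] s1 derR by auto
      then have "g s = g 1" using d0[of z] by simp
      then show ?thesis using in01[of 1] by simp
    qed
  qed
qed

context
  fixes TT :: "'a::{complex_normed_vector,banach} itself"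
  assumes hilb: "hilbert_norm TYPE('a)"
begin

lemma form_bound:
  fixes S0 H0 H1 H :: "'a \<Rightarrow> 'a" and D0 :: "'a set"
  assumes sS0: "sym_op S0" and S0H0: "\<And>z. z \<in> D0 \<Longrightarrow> S0 (S0 (H0 z)) = z"
    and Hdef: "\<And>z. H z = H0 z + c *\<^sub>R H1 z"
    and H1b: "\<And>x. norm (H1 (S0 x)) \<le> C' * norm x" and C'0: "C' \<ge> 0"
    and cb: "\<bar>c\<bar> \<le> Cc"
    and Hlb: "\<And>z. z \<in> D0 \<Longrightarrow> (norm z)\<^sup>2 \<le> rip z (H z)"
    and z: "z \<in> D0"
  shows "(norm (S0 (H0 z)))\<^sup>2 \<le> (2 + (Cc * C')\<^sup>2) * rip z (H z)"
proof -
  let ?w = "H0 z"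
  let ?a = "norm (S0 ?w)"
  let ?h = "rip z (H z)"
  have zS: "z = S0 (S0 ?w)" using S0H0[OF z] by simp
  have e1: "rip z (H0 z) = ?a\<^sup>2"
  proof -
    have "rip z (H0 z) = rip (S0 (S0 ?w)) ?w" using zS by simp
    also have "\<dots> = rip (S0 ?w) (S0 ?w)" using sS0 unfolding sym_op_def by metis
    finally show ?thesis by (simp add: rip_self)
  qed
  have n1: "norm (H1 z) \<le> C' * ?a" using H1b[of "S0 ?w"] zS by simp
  have h: "?h = ?a\<^sup>2 + c * rip z (H1 z)" unfolding Hdef by (simp add: rip_add_right[OF hilb] rip_scaleR_right[OF hilb] e1)
  have "\<bar>c * rip z (H1 z)\<bar> \<le> Cc * (norm z * (C' * ?a))"
  proof -
    have "\<bar>rip z (H1 z)\<bar> \<le> norm z * norm (H1 z)" by (rule rip_bound)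
    also have "\<dots> \<le> norm z * (C' * ?a)" by (rule mult_left_mono[OF n1]) simp
    finally have r: "\<bar>rip z (H1 z)\<bar> \<le> norm z * (C' * ?a)" .
    have "\<bar>c * rip z (H1 z)\<bar> = \<bar>c\<bar> * \<bar>rip z (H1 z)\<bar>" by (simp add: abs_mult)
    also have "\<dots> \<le> Cc * (norm z * (C' * ?a))" using cb r by (intro mult_mono) auto
    finally show ?thesis .
  qed
  then have a1: "?a\<^sup>2 \<le> ?h + (Cc * C' * norm z) * ?a" using h by (simp add: algebra_simps abs_le_iff)
  have amgm: "(Cc * C' * norm z) * ?a \<le> ((Cc * C' * norm z)\<^sup>2 + ?a\<^sup>2) / 2"
    using sum_squares_bound[of "Cc * C' * norm z" ?a] by (simp add: power2_eq_square field_simps)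
  have zh: "(norm z)\<^sup>2 \<le> ?h" by (rule Hlb[OF z])
  have "(Cc * C' * norm z)\<^sup>2 = (Cc * C')\<^sup>2 * (norm z)\<^sup>2" by (simp add: power_mult_distrib)
  also have "\<dots> \<le> (Cc * C')\<^sup>2 * ?h" by (rule mult_left_mono[OF zh]) simp
  finally have b: "(Cc * C' * norm z)\<^sup>2 \<le> (Cc * C')\<^sup>2 * ?h" .
  show ?thesis using a1 amgm b by (simp add: algebra_simps)
qed

end



context
  fixes TT :: "'a::{complex_normed_vector,banach} itself"
  assumes hilb: "hilbert_norm TYPE('a)"
begin

lemma approx:
  fixes S0 SH H0 H :: "'a \<Rightarrow> 'a" and D0 :: "'a set"
  assumes blS0: "bounded_linear S0" and blSH: "bounded_linear SH" and sSH: "sym_op SH"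
    and lo0: "lin_op D0 H0" and dense: "closure D0 = UNIV"
    and SHH: "\<And>v. SH (SH v) \<in> D0 \<and> H (SH (SH v)) = v"
    and SHH': "\<And>z. z \<in> D0 \<Longrightarrow> SH (SH (H z)) = z"
    and S0H0: "\<And>z. z \<in> D0 \<Longrightarrow> S0 (S0 (H0 z)) = z"
    and fb: "\<And>z. z \<in> D0 \<Longrightarrow> (norm (S0 (H0 z)))\<^sup>2 \<le> K * rip z (H z)" and K0: "K \<ge> 0"
  shows "\<exists>u. SH x = S0 u \<and> norm u \<le> sqrt K * norm x"
proof -
  define U where "U v = S0 (H0 (SH (SH v)))" for v
  have U_S0: "S0 (U v) = SH (SH v)" for v unfolding U_def using S0H0 SHH by blast
  have U_norm: "norm (U v) \<le> sqrt K * norm (SH v)" for v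
  proof -
    let ?z = "SH (SH v)"
    have zD: "?z \<in> D0" using SHH by blast
    have "(norm (U v))\<^sup>2 \<le> K * rip ?z (H ?z)" unfolding U_def by (rule fb[OF zD])
    also have "rip ?z (H ?z) = rip ?z v" using SHH by simp
    also have "\<dots> = rip (SH v) (SH v)" using sSH unfolding sym_op_def by (metis rip_sym)
    also have "\<dots> = (norm (SH v))\<^sup>2" by (rule rip_self)
    finally have "(norm (U v))\<^sup>2 \<le> (sqrt K * norm (SH v))\<^sup>2" using K0 by (simp add: power_mult_distrib)
    then show ?thesis by (rule power2_le_imp_le) (use K0 in simp)
  qed
  have linSH: "linear SH" by (rule bounded_linear.linear[OF blSH])
  have linS0: "linear S0" by (rule bounded_linear.linear[OF blS0])
  have U_diff: "U (v1 - v2) = U v1 - U v2" for v1 v2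
  proof -
    have "SH (SH (v1 - v2)) = SH (SH v1) - SH (SH v2)" by (simp add: linear_diff[OF linSH])
    moreover have "H0 (SH (SH v1) - SH (SH v2)) = H0 (SH (SH v1)) - H0 (SH (SH v2))"
      using SHH by (intro lo_T_diff[OF lo0]) auto
    ultimately show ?thesis unfolding U_def by (simp add: linear_diff[OF linS0])
  qed
  have "x \<in> closure (range SH)"
  proof -
    have "D0 \<subseteq> range SH" using SHH' by (metis image_eqI rangeI subsetI)
    then have "closure D0 \<subseteq> closure (range SH)" by (rule closure_mono)
    then show ?thesis using dense by auto
  qed
  then obtain s where s: "\<And>n. s n \<in> range SH" "s \<longlonglongrightarrow> x" unfolding closure_sequential by blast
  then have "\<forall>n. \<exists>v. s n = SH v" by blast
  then obtain v where v: "\<And>n. s n = SH (v n)" by metis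
  have SHv: "(\<lambda>n. SH (v n)) \<longlonglongrightarrow> x" using s(2) v by (metis (no_types) ext)
  have cs: "Cauchy (\<lambda>n. SH (v n))" by (rule LIMSEQ_imp_Cauchy[OF SHv])
  have "Cauchy (\<lambda>n. U (v n))"
  proof (rule CauchyI)
    fix e :: real assume e: "e > 0"
    have e': "e / (sqrt K + 1) > 0" using e K0 by (simp add: add_nonneg_pos)
    obtain M where M: "\<forall>m\<ge>M. \<forall>n\<ge>M. norm (SH (v m) - SH (v n)) < e / (sqrt K + 1)"
      using CauchyD[OF cs e'] by blast
    show "\<exists>M. \<forall>m\<ge>M. \<forall>n\<ge>M. norm (U (v m) - U (v n)) < e"
    proof (intro exI allI impI)
      fix m n assume mn: "M \<le> m" "M \<le> n"
      have "norm (U (v m) - U (v n)) = norm (U (v m - v n))" by (simp add: U_diff)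
      also have "\<dots> \<le> sqrt K * norm (SH (v m - v n))" by (rule U_norm)
      also have "\<dots> = sqrt K * norm (SH (v m) - SH (v n))" by (simp add: linear_diff[OF linSH])
      also have "\<dots> \<le> sqrt K * (e / (sqrt K + 1))" using M mn K0 by (intro mult_left_mono) (auto intro: less_imp_le)
      also have "\<dots> < e"
      proof -
        have p: "sqrt K + 1 > 0" using K0 by (simp add: add_nonneg_pos)
        have "sqrt K * (e / (sqrt K + 1)) = e * (sqrt K / (sqrt K + 1))" by simp
        also have "\<dots> < e * 1" using p e by (intro mult_strict_left_mono) auto
        finally show ?thesis by simp
      qed
      finally show "norm (U (v m) - U (v n)) < e" .
    qed
  qed
  then obtain u where u: "(\<lambda>n. U (v n)) \<longlonglongrightarrow> u" using Cauchy_convergent_iff convergent_def by blast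
  have "(\<lambda>n. S0 (U (v n))) \<longlonglongrightarrow> S0 u" by (rule bounded_linear.tendsto[OF blS0 u])
  moreover have "(\<lambda>n. S0 (U (v n))) \<longlonglongrightarrow> SH x"
    unfolding U_S0 by (rule bounded_linear.tendsto[OF blSH SHv])
  ultimately have eq: "SH x = S0 u" using LIMSEQ_unique by metis
  have "norm u \<le> sqrt K * norm x"
  proof (rule LIMSEQ_le)
    show "(\<lambda>n. norm (U (v n))) \<longlonglongrightarrow> norm u" by (intro tendsto_intros u)
    show "(\<lambda>n. sqrt K * norm (SH (v n))) \<longlonglongrightarrow> sqrt K * norm x" by (intro tendsto_intros SHv)
    show "\<exists>N. \<forall>n\<ge>N. norm (U (v n)) \<le> sqrt K * norm (SH (v n))" using U_norm by blast
  qed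
  then show ?thesis using eq by blast
qed

end

theorem mainTheorem3:
  fixes D0 D1 :: "'a::{complex_normed_vector,banach} set"
    and H0 H1 :: "'a \<Rightarrow> 'a"
    and g :: "real \<Rightarrow> real"
    and \<gamma>0 M \<epsilon>s :: real
  assumes hilb: "hilbert_norm TYPE('a)"
    and sep: "separable_carrier TYPE('a)"
    and H0_sa: "self_adjoint_op D0 H0"
    and \<gamma>0_pos: "\<gamma>0 > 0"
    and H0_ge: "op_ge D0 H0 (1 + \<gamma>0)"
    and H1_sa: "self_adjoint_op D1 H1"
    and H1_dom: "range (inv_sqrt_op D0 H0) \<subseteq> D1"
    and H1_rel: "\<exists>C. \<forall>x. norm (H1 (inv_sqrt_op D0 H0 x)) \<le> C * norm x"
    and g_C1: "g C1_differentiable_on UNIV"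
    and g_supp: "closure {s. deriv g s \<noteq> 0} \<subseteq> {0<..<1}"
    and g_neg: "\<And>s. s < 0 \<Longrightarrow> g s = 0"
    and M_def: "M = (SUP s\<in>{0..1}. \<bar>g s\<bar>)"
    and \<epsilon>s_pos: "\<epsilon>s > 0"
    and \<epsilon>s_small: "(3 * \<gamma>0 + 1) / \<gamma>0 * \<epsilon>s * M
        * onorm (\<lambda>x. H1 (inv_sqrt_op D0 H0 (inv_sqrt_op D0 H0 x))) < 1"
    and H_sa: "\<And>\<epsilon> \<eta> t. 0 < \<epsilon> \<Longrightarrow> \<epsilon> \<le> \<epsilon>s \<Longrightarrow> 0 < \<eta> \<Longrightarrow>
        self_adjoint_op D0 (Hpert H0 H1 g \<epsilon> \<eta> t)"
    and H_ge: "\<And>\<epsilon> \<eta> t. 0 < \<epsilon> \<Longrightarrow> \<epsilon> \<le> \<epsilon>s \<Longrightarrow> 0 < \<eta> \<Longrightarrow>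
        op_ge D0 (Hpert H0 H1 g \<epsilon> \<eta> t) 1"
  shows "\<exists>a b0 b1. a \<ge> 0 \<and> b0 \<ge> 0 \<and> b1 \<ge> 0 \<and>
    (\<forall>\<epsilon> \<eta> t. 0 < \<epsilon> \<and> \<epsilon> \<le> \<epsilon>s \<and> 0 < \<eta> \<longrightarrow>
       range (inv_sqrt_op D0 (Hpert H0 H1 g \<epsilon> \<eta> t)) \<subseteq> D1 \<and>
       (\<forall>x. norm (H1 (inv_sqrt_op D0 (Hpert H0 H1 g \<epsilon> \<eta> t) x)) \<le> (a + b0 + b1 * \<epsilon>) * norm x))"
proof -
  have ge1: "op_ge D0 H0 1"
    unfolding op_ge_def
  proof
    fix x assume x: "x \<in> D0"
    have "(1 + \<gamma>0) * (norm x)\<^sup>2 \<le> Re (cinner x (H0 x))" using H0_ge x unfolding op_ge_def by blast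
    moreover have "1 * (norm x)\<^sup>2 \<le> (1 + \<gamma>0) * (norm x)\<^sup>2" using \<gamma>0_pos by (intro mult_right_mono) auto
    ultimately show "1 * (norm x)\<^sup>2 \<le> Re (cinner x (H0 x))" by linarith
  qed
  obtain S0 where S0: "inv_sqrt_op D0 H0 = S0" and blS0: "bounded_linear S0" and sS0: "sym_op S0"
    and S0H0: "\<forall>z\<in>D0. S0 (S0 (H0 z)) = z"
    using inv_sqrt_props[OF hilb H0_sa ge1] by blast
  have lo0: "lin_op D0 H0" and dense0: "closure D0 = UNIV"
    using H0_sa unfolding self_adjoint_op_def by blast+
  obtain C where C: "\<And>x. norm (H1 (S0 x)) \<le> C * norm x" using H1_rel S0 by blast
  define C' where "C' = \<bar>C\<bar>"
  have C'0: "C' \<ge> 0" by (simp add: C'_def)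
  have C': "norm (H1 (S0 x)) \<le> C' * norm x" for x
    using C[of x] unfolding C'_def by (smt (verit) mult_right_mono norm_ge_zero)
  have gb: "\<bar>g s\<bar> \<le> M" for s by (rule g_bound[OF g_C1 g_supp g_neg M_def])
  have M0: "M \<ge> 0" using gb[of 0] by simp
  define K where "K = 2 + (\<epsilon>s * M * C')\<^sup>2"
  have K0: "K \<ge> 0" by (simp add: K_def)
  define a where "a = C' * sqrt K"
  have a0: "a \<ge> 0" using C'0 K0 by (simp add: a_def)
  have main: "range (inv_sqrt_op D0 (Hpert H0 H1 g \<epsilon> \<eta> t)) \<subseteq> D1 \<and>
       (\<forall>x. norm (H1 (inv_sqrt_op D0 (Hpert H0 H1 g \<epsilon> \<eta> t) x)) \<le> (a + 0 + 0 * \<epsilon>) * norm x)"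
    if e: "0 < \<epsilon>" "\<epsilon> \<le> \<epsilon>s" "0 < \<eta>" for \<epsilon> \<eta> t
  proof -
    let ?H = "Hpert H0 H1 g \<epsilon> \<eta> t"
    let ?c = "\<epsilon> * g (\<eta> * t)"
    have cb: "\<bar>?c\<bar> \<le> \<epsilon>s * M"
    proof -
      have "\<bar>?c\<bar> = \<epsilon> * \<bar>g (\<eta> * t)\<bar>" using e by (simp add: abs_mult)
      also have "\<dots> \<le> \<epsilon>s * M" using e gb M0 by (intro mult_mono) auto
      finally show ?thesis .
    qed
    have Hsa: "self_adjoint_op D0 ?H" by (rule H_sa[OF e])
    have Hge: "op_ge D0 ?H 1" by (rule H_ge[OF e])
    obtain SH where SH: "inv_sqrt_op D0 ?H = SH" and blSH: "bounded_linear SH" and sSH: "sym_op SH"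
      and SHH: "\<forall>x. SH (SH x) \<in> D0 \<and> ?H (SH (SH x)) = x" and SHH': "\<forall>z\<in>D0. SH (SH (?H z)) = z"
      using inv_sqrt_props[OF hilb Hsa Hge] by blast
    have Hlb: "(norm z)\<^sup>2 \<le> rip z (?H z)" if "z \<in> D0" for z
      using Hge that unfolding op_ge_def by (simp add: cinner_rip)
    have fb: "(norm (S0 (H0 z)))\<^sup>2 \<le> K * rip z (?H z)" if "z \<in> D0" for z
      unfolding K_def
      by (rule form_bound[OF hilb sS0 _ _ C' C'0 cb Hlb that]) (use S0H0 in \<open>auto simp: Hpert_def\<close>)
    have ex: "\<exists>u. SH x = S0 u \<and> norm u \<le> sqrt K * norm x" for x
      by (rule approx[OF hilb blS0 blSH sSH lo0 dense0 _ _ _ fb K0]) (use SHH SHH' S0H0 in auto)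
    have "SH x \<in> D1 \<and> norm (H1 (SH x)) \<le> a * norm x" for x
    proof -
      obtain u where u: "SH x = S0 u" "norm u \<le> sqrt K * norm x" using ex by blast
      have "SH x \<in> D1" using H1_dom S0 u(1) by auto
      moreover have "norm (H1 (SH x)) \<le> C' * norm u" using C'[of u] u(1) by simp
      moreover have "C' * norm u \<le> C' * (sqrt K * norm x)" by (rule mult_left_mono[OF u(2) C'0])
      ultimately show ?thesis by (simp add: a_def mult.assoc)
    qed
    then show ?thesis using SH by auto
  qed
  show ?thesis
    by (rule exI[of _ a], rule exI[of _ 0], rule exI[of _ 0]) (use a0 main in auto)
qed


end
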